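(* Let $\Delta\subset TM$ be a regular, completely non-holonomic distribution on a smooth manifold $M$, let $x\in M$, and let $\kappa$ be the least integer with $\Delta_\kappa=TM$. Let $\{Z_{jl}\}$ ($1\le j\le\kappa$) be a local frame of $TM$ near $x$ compatible with the weak derived flag. Let $X\in\mathcal{L}(x)^i$ for some $i\ge0$, and write $X=\sum_{j,l}f_{jl}Z_{jl}$. Then $f_{jl}\in\mu_{\Delta,x}^{i+j}$ for all $1\le j\le\kappa$ and all $l$.
   Context: Weak derived flag: $\Delta_1=\Delta$, $\Gamma(\Delta_{i+1})=[\Gamma(\Delta),\Gamma(\Delta_i)]$, and $\Delta_s=0$ for $s\le0$. Regular means that all $\Delta_s$ have constant rank. A frame $\{Z_{jl}\}$ is compatible with the weak derived flag if each $Z_{jl}$ is a section of $\Delta_j$ and, for every $s$, the fields $\{Z_{tl}:t\le s\}$ form a local frame of $\Delta_s$ near $x$. $\mathcal{L}(x)$ is the Lie algebra of germs at $x$ of vector fields $X$ with $[X,\Gamma(\Delta)]\subset\Gamma(\Delta)$. Its filtration is defined as follows. - For $i<0$: $\mathcal{L}(x)^i=\{X: X_x\in(\Delta_{-i})_x\}$. - $\mathcal{L}(x)^0=\{X:X_x=0\}$. - For $i\ge0$: $\mathcal{L}(x)^{i+1}=\{X\in\mathcal{L}(x)^i: [[\cdots[X,Y_1],Y_2],\dots],Y_{i+1}]_x=0$ for all $Y_1,\dots,Y_{i+1}\in\Gamma(\Delta)\}$. A function $f$ belongs to $\mu_{\Delta,x}^{k+1}$ if $(Y_1\cdots Y_t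 f)(x)=0$ for all $Y_1,\dots,Y_t\in\Gamma(\Delta)$ and all $0\le t\le k$. For $t=0$ this is the condition $f(x)=0$. *)

theory Defs
  imports "HOL-Analysis.Analysis"
begin

(* Local (chart) model: the manifold M is an open set U of a euclidean space 'a;
   tangent vectors / vector fields are 'a-valued. *)

fun pderiv_iter :: "'a::real_normed_vector list \<Rightarrow> ('a \<Rightarrow> 'b::real_normed_vector) \<Rightarrow> 'a \<Rightarrow> 'b" where
  "pderiv_iter [] f = f"
| "pderiv_iter (v # vs) f = (\<lambda>y. frechet_derivative (pderiv_iter vs f) (at y) v)"

definition smooth_on :: "'a::real_normed_vector set \<Rightarrow> ('a \<Rightarrow> 'b::real_normed_vector) \<Rightarrow> bool" where
  "smooth_on V f \<longleftrightarrow> (\<forall>vs. \<forall>y\<in>V. pderiv_iter vs f differentiable (at y))"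

definition lie_deriv :: "('a::real_normed_vector \<Rightarrow> 'a) \<Rightarrow> ('a \<Rightarrow> real) \<Rightarrow> 'a \<Rightarrow> real" where
  "lie_deriv Y f = (\<lambda>y. frechet_derivative f (at y) (Y y))"

(* Lie bracket [X,Y], with [X,Y]f = X(Yf) - Y(Xf) *)
definition lie_bracket :: "('a::real_normed_vector \<Rightarrow> 'a) \<Rightarrow> ('a \<Rightarrow> 'a) \<Rightarrow> 'a \<Rightarrow> 'a" where
  "lie_bracket X Y = (\<lambda>y. frechet_derivative Y (at y) (X y) - frechet_derivative X (at y) (Y y))"

definition section_on :: "'a::euclidean_space set \<Rightarrow> ('a \<Rightarrow> 'a set) \<Rightarrow> 'a set \<Rightarrow> ('a \<Rightarrow> 'a) \<Rightarrow> bool" where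
  "section_on U E V Y \<longleftrightarrow> open V \<and> V \<subseteq> U \<and> smooth_on V Y \<and> (\<forall>y\<in>V. Y y \<in> E y)"

(* Y represents a germ at x of a section of E, i.e. Y \<in> \<Gamma>(E) near x *)
definition local_section :: "'a::euclidean_space set \<Rightarrow> ('a \<Rightarrow> 'a set) \<Rightarrow> 'a \<Rightarrow> ('a \<Rightarrow> 'a) \<Rightarrow> bool" where
  "local_section U E x Y \<longleftrightarrow> (\<exists>V. x \<in> V \<and> section_on U E V Y)"

definition smooth_distribution :: "'a::euclidean_space set \<Rightarrow> ('a \<Rightarrow> 'a set) \<Rightarrow> bool" where
  "smooth_distribution U D \<longleftrightarrow> open U \<and> (\<forall>y\<in>U. subspace (D y)) \<and>
     (\<forall>y\<in>U. \<exists>V Ys. open V \<and> y \<in> V \<and> V \<subseteq> U \<and> finite Ys \<and> (\<forall>Y\<in>Ys. smooth_on V Y) \<and>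
        (\<forall>z\<in>V. span ((\<lambda>Y. Y z) ` Ys) = D z))"

(* weak derived flag, pointwise: \<Delta>_0 = 0, \<Delta>_1 = \<Delta>,
   (\<Delta>_{s+1})_y = span of (\<Delta>_s)_y and the values at y of brackets [Y,Z],
   Y \<in> \<Gamma>(\<Delta>), Z \<in> \<Gamma>(\<Delta>_s) near y *)
fun flag :: "'a::euclidean_space set \<Rightarrow> ('a \<Rightarrow> 'a set) \<Rightarrow> nat \<Rightarrow> 'a \<Rightarrow> 'a set" where
  "flag U D 0 = (\<lambda>y. {0})"
| "flag U D (Suc 0) = D"
| "flag U D (Suc (Suc s)) = (\<lambda>y. span (flag U D (Suc s) y \<union>
      {lie_bracket Y Z y | Y Z. \<exists>V. y \<in> V \<and> section_on U D V Y \<and> section_on U (flag U D (Suc s)) V Z}))"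

definition regular :: "'a::euclidean_space set \<Rightarrow> ('a \<Rightarrow> 'a set) \<Rightarrow> bool" where
  "regular U D \<longleftrightarrow> (\<forall>s\<ge>1. \<exists>r. \<forall>y\<in>U. dim (flag U D s y) = r)"

(* the germs at x of vector fields X with [X, \<Gamma>(\<Delta>)] \<subseteq> \<Gamma>(\<Delta>) *)
definition Lx :: "'a::euclidean_space set \<Rightarrow> ('a \<Rightarrow> 'a set) \<Rightarrow> 'a \<Rightarrow> ('a \<Rightarrow> 'a) \<Rightarrow> bool" where
  "Lx U D x X \<longleftrightarrow> (\<exists>V. open V \<and> V \<subseteq> U \<and> x \<in> V \<and> smooth_on V X) \<and>
     (\<forall>Y. local_section U D x Y \<longrightarrow> local_section U D x (lie_bracket X Y))"

fun Lfilt :: "'a::euclidean_space set \<Rightarrow> ('a \<Rightarrow> 'a set) \<Rightarrow> 'a \<Rightarrow> nat \<Rightarrow> ('a \<Rightarrow> 'a) \<Rightarrow> bool" where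
  "Lfilt U D x 0 X \<longleftrightarrow> Lx U D x X \<and> X x = 0"
| "Lfilt U D x (Suc i) X \<longleftrightarrow> Lfilt U D x i X \<and>
     (\<forall>Ys. length Ys = Suc i \<and> (\<forall>Y\<in>set Ys. local_section U D x Y) \<longrightarrow>
        foldl lie_bracket X Ys x = 0)"

(* mu U D x m f  means  f \<in> \<mu>_{\<Delta>,x}^m  (m = k+1: (Y_1 ... Y_t f)(x) = 0 for all t \<le> k) *)
definition mu :: "'a::euclidean_space set \<Rightarrow> ('a \<Rightarrow> 'a set) \<Rightarrow> 'a \<Rightarrow> nat \<Rightarrow> ('a \<Rightarrow> real) \<Rightarrow> bool" where
  "mu U D x m f \<longleftrightarrow> (\<exists>V. open V \<and> V \<subseteq> U \<and> x \<in> V \<and> smooth_on V f) \<and>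
     (\<forall>Ys. length Ys < m \<and> (\<forall>Y\<in>set Ys. local_section U D x Y) \<longrightarrow> foldr lie_deriv Ys f x = 0)"

definition frame_idx :: "(nat \<Rightarrow> nat) \<Rightarrow> nat \<Rightarrow> nat \<Rightarrow> (nat \<times> nat) set" where
  "frame_idx r \<kappa> s = {(t, l). 1 \<le> t \<and> t \<le> min s \<kappa> \<and> l < r t}"

end

theory Submission
  imports Defs
begin

definition Ck :: "nat \<Rightarrow> 'a::real_normed_vector set \<Rightarrow> ('a \<Rightarrow> 'b::real_normed_vector) \<Rightarrow> bool" where
  "Ck n V f \<longleftrightarrow> (\<forall>vs. length vs \<le> n \<longrightarrow> (\<forall>y\<in>V. pderiv_iter vs f differentiable (at y)))"

lemma pderiv_iter_snoc: "pderiv_iter (vs @ [v]) f = pderiv_iter vs (pderiv_iter [v] f)"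
  by (induction vs) auto

lemma smooth_Ck: "smooth_on V f \<longleftrightarrow> (\<forall>n. Ck n V f)"
  unfolding smooth_on_def Ck_def by (metis order_refl)

lemma Ck_Suc: "Ck (Suc n) V f \<longleftrightarrow> (\<forall>y\<in>V. f differentiable (at y)) \<and> (\<forall>v. Ck n V (pderiv_iter [v] f))"
proof
  assume a: "Ck (Suc n) V f"
  show "(\<forall>y\<in>V. f differentiable (at y)) \<and> (\<forall>v. Ck n V (pderiv_iter [v] f))"
  proof
    show "\<forall>y\<in>V. f differentiable (at y)" using a unfolding Ck_def
      by (metis le0 list.size(3) pderiv_iter.simps(1))
    show "\<forall>v. Ck n V (pderiv_iter [v] f)" using a unfolding Ck_def
      by (metis Suc_le_mono length_append_singleton pderiv_iter_snoc)
  qed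
next
  assume a: "(\<forall>y\<in>V. f differentiable (at y)) \<and> (\<forall>v. Ck n V (pderiv_iter [v] f))"
  show "Ck (Suc n) V f" unfolding Ck_def
  proof (intro allI impI)
    fix vs :: "'a list" assume l: "length vs \<le> Suc n"
    show "\<forall>y\<in>V. pderiv_iter vs f differentiable at y"
    proof (cases vs rule: rev_exhaust)
      case Nil then show ?thesis using a by simp
    next
      case (snoc ws v)
      then show ?thesis using a l unfolding Ck_def by (simp add: pderiv_iter_snoc)
    qed
  qed
qed

lemma Ck_0: "Ck 0 V f \<longleftrightarrow> (\<forall>y\<in>V. f differentiable (at y))"
  unfolding Ck_def by auto

lemma Ck_mono: "m \<le> n \<Longrightarrow> Ck n V f \<Longrightarrow> Ck m V f"
  unfolding Ck_def by auto

lemma Ck_subset: "V' \<subseteq> V \<Longrightarrow> Ck n V f \<Longrightarrow> Ck n V' f"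
  unfolding Ck_def by auto

lemma smooth_subset: "V' \<subseteq> V \<Longrightarrow> smooth_on V f \<Longrightarrow> smooth_on V' f"
  unfolding smooth_on_def by auto

lemma smooth_imp_Ck: "smooth_on V f \<Longrightarrow> Ck n V f"
  by (simp add: smooth_Ck)

lemma smooth_diff_at: "smooth_on V f \<Longrightarrow> y \<in> V \<Longrightarrow> f differentiable (at y)"
  unfolding smooth_on_def by (metis pderiv_iter.simps(1))

lemma has_derivative_cong_open:
  assumes "open A" "y \<in> A" "\<forall>z\<in>A. f z = g z"
  shows "(f has_derivative D) (at y) \<longleftrightarrow> (g has_derivative D) (at y)"
  using assms has_derivative_transform_within_open[of f D y UNIV A g]
    has_derivative_transform_within_open[of g D y UNIV A f] by auto

lemma fd_cong:
  assumes "open A" "y \<in> A" "\<forall>z\<in>A. f z = g z"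
  shows "frechet_derivative f (at y) = frechet_derivative g (at y)"
  unfolding frechet_derivative_def using has_derivative_cong_open[OF assms] by simp

lemma diff_cong:
  assumes "open A" "y \<in> A" "\<forall>z\<in>A. f z = g z"
  shows "f differentiable (at y) \<longleftrightarrow> g differentiable (at y)"
  unfolding differentiable_def using has_derivative_cong_open[OF assms] by simp

lemma pderiv_iter_cong:
  assumes "open A" "\<forall>z\<in>A. f z = g z"
  shows "\<forall>y\<in>A. pderiv_iter vs f y = pderiv_iter vs g y"
  using assms by (induction vs) (auto intro!: fun_cong[OF fd_cong])

lemma Ck_cong:
  assumes "open A" "\<forall>z\<in>A. f z = g z"
  shows "Ck n A f \<longleftrightarrow> Ck n A g"
  unfolding Ck_def using diff_cong[OF assms(1) _ pderiv_iter_cong[OF assms]] by blast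

lemma smooth_cong:
  assumes "open A" "\<forall>z\<in>A. f z = g z"
  shows "smooth_on A f \<longleftrightarrow> smooth_on A g"
  using Ck_cong[OF assms] by (simp add: smooth_Ck)

lemma fd_eq: "(f has_derivative D) (at y) \<Longrightarrow> frechet_derivative f (at y) v = D v"
  using frechet_derivative_at by metis

lemma fd_works: "f differentiable (at y) \<Longrightarrow> (f has_derivative frechet_derivative f (at y)) (at y)"
  using frechet_derivative_works by blast

lemma Ck_transfer:
  assumes "open V" "\<forall>y\<in>V. F y = G y" "Ck n V G"
  shows "Ck n V F"
  using Ck_cong[OF assms(1,2)] assms(3) by simp

lemma Ck_const: "Ck n V (\<lambda>_. c)"
proof (induction n arbitrary: c)
  case 0 then show ?case by (simp add: Ck_0)
next
  case (Suc n)
  have e: "pderiv_iter [v] (\<lambda>_. c) = (\<lambda>_. 0)" for v by simp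
  show ?case unfolding Ck_Suc e using Suc by simp
qed

lemma Ck_add:
  assumes "open V" "Ck n V f" "Ck n V g"
  shows "Ck n V (\<lambda>y. f y + g y)"
  using assms(2,3)
proof (induction n arbitrary: f g)
  case 0 then show ?case by (simp add: Ck_0 differentiable_add)
next
  case (Suc n)
  have df: "\<forall>y\<in>V. f differentiable (at y)" and dg: "\<forall>y\<in>V. g differentiable (at y)"
    using Suc.prems by (auto simp: Ck_Suc)
  show ?case unfolding Ck_Suc
  proof (intro conjI allI)
    show "\<forall>y\<in>V. (\<lambda>y. f y + g y) differentiable at y" using df dg by (simp add: differentiable_add)
    fix v
    have e: "\<forall>y\<in>V. pderiv_iter [v] (\<lambda>y. f y + g y) y = pderiv_iter [v] f y + pderiv_iter [v] g y"
    proof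
      fix y assume y: "y \<in> V"
      have "((\<lambda>y. f y + g y) has_derivative (\<lambda>h. frechet_derivative f (at y) h + frechet_derivative g (at y) h)) (at y)"
        using df dg y by (auto intro!: has_derivative_add fd_works)
      then show "pderiv_iter [v] (\<lambda>y. f y + g y) y = pderiv_iter [v] f y + pderiv_iter [v] g y"
        by (simp add: fd_eq)
    qed
    have fv: "Ck n V (pderiv_iter [v] f)" using Suc.prems(1) unfolding Ck_Suc by blast
    have gv: "Ck n V (pderiv_iter [v] g)" using Suc.prems(2) unfolding Ck_Suc by blast
    show "Ck n V (pderiv_iter [v] (\<lambda>y. f y + g y))"
      by (rule Ck_transfer[OF assms(1) e Suc.IH[OF fv gv]])
  qed
qed

lemma diff_bl:
  assumes "bounded_linear L" "f differentiable (at y)"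
  shows "(\<lambda>y. L (f y)) differentiable (at y)"
proof -
  from assms(2) obtain D where "(f has_derivative D) (at y)" unfolding differentiable_def by blast
  from bounded_linear.has_derivative[OF assms(1) this] show ?thesis
    unfolding differentiable_def by blast
qed

lemma Ck_bl:
  assumes "open V" "bounded_linear L" "Ck n V f"
  shows "Ck n V (\<lambda>y. L (f y))"
  using assms(3)
proof (induction n arbitrary: f)
  case 0 then show ?case using assms(2)
    by (auto simp: Ck_0 intro: diff_bl)
next
  case (Suc n)
  have df: "\<forall>y\<in>V. f differentiable (at y)"
    using Suc.prems by (auto simp: Ck_Suc)
  show ?case unfolding Ck_Suc
  proof (intro conjI allI)
    show "\<forall>y\<in>V. (\<lambda>y. L (f y)) differentiable at y" using df assms(2)
      by (auto intro: diff_bl)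
    fix v
    have e: "\<forall>y\<in>V. pderiv_iter [v] (\<lambda>y. L (f y)) y = L (pderiv_iter [v] f y)"
    proof
      fix y assume y: "y \<in> V"
      have "((\<lambda>y. L (f y)) has_derivative (\<lambda>h. L (frechet_derivative f (at y) h))) (at y)"
        using df y by (intro bounded_linear.has_derivative[OF assms(2)] fd_works) auto
      then show "pderiv_iter [v] (\<lambda>y. L (f y)) y = L (pderiv_iter [v] f y)"
        by (simp add: fd_eq)
    qed
    have fv: "Ck n V (pderiv_iter [v] f)" using Suc.prems(1) unfolding Ck_Suc by blast
    show "Ck n V (pderiv_iter [v] (\<lambda>y. L (f y)))"
      by (rule Ck_transfer[OF assms(1) e Suc.IH[OF fv]])
  qed
qed

lemma Ck_scaleR:
  assumes "open V" "Ck n V f" "Ck n V g"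
  shows "Ck n V (\<lambda>y. f y *\<^sub>R g y)"
  using assms(2,3)
proof (induction n arbitrary: f g)
  case 0 then show ?case by (auto simp: Ck_0)
next
  case (Suc n)
  have df: "\<forall>y\<in>V. f differentiable (at y)" and dg: "\<forall>y\<in>V. g differentiable (at y)"
    using Suc.prems by (auto simp: Ck_Suc)
  have fn: "Ck n V f" using Ck_mono[OF _ Suc.prems(1)] by simp
  have gn: "Ck n V g" using Ck_mono[OF _ Suc.prems(2)] by simp
  show ?case unfolding Ck_Suc
  proof (intro conjI allI)
    show "\<forall>y\<in>V. (\<lambda>y. f y *\<^sub>R g y) differentiable at y" using df dg
      by auto
    fix v
    have fv: "Ck n V (pderiv_iter [v] f)" using Suc.prems(1) unfolding Ck_Suc by blast
    have gv: "Ck n V (pderiv_iter [v] g)" using Suc.prems(2) unfolding Ck_Suc by blast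
    have "\<forall>y\<in>V. pderiv_iter [v] (\<lambda>y. f y *\<^sub>R g y) y
        = f y *\<^sub>R pderiv_iter [v] g y + pderiv_iter [v] f y *\<^sub>R g y"
    proof
      fix y assume y: "y \<in> V"
      have "((\<lambda>y. f y *\<^sub>R g y) has_derivative
          (\<lambda>h. f y *\<^sub>R frechet_derivative g (at y) h + frechet_derivative f (at y) h *\<^sub>R g y)) (at y)"
        using df dg y by (auto intro!: has_derivative_scaleR fd_works)
      then show "pderiv_iter [v] (\<lambda>y. f y *\<^sub>R g y) y
        = f y *\<^sub>R pderiv_iter [v] g y + pderiv_iter [v] f y *\<^sub>R g y"
        by (simp add: fd_eq)
    qed
    moreover have "Ck n V (\<lambda>y. f y *\<^sub>R pderiv_iter [v] g y + pderiv_iter [v] f y *\<^sub>R g y)"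
      by (rule Ck_add[OF assms(1) Suc.IH[OF fn gv] Suc.IH[OF fv gn]])
    ultimately show "Ck n V (pderiv_iter [v] (\<lambda>y. f y *\<^sub>R g y))"
      by (rule Ck_transfer[OF assms(1)])
  qed
qed

lemma Ck_inverse:
  fixes f :: "'a::real_normed_vector \<Rightarrow> real"
  assumes "open V" "Ck n V f" "\<forall>y\<in>V. f y \<noteq> 0"
  shows "Ck n V (\<lambda>y. inverse (f y))"
  using assms(2)
proof (induction n)
  case 0 then show ?case using assms(3)
    by (auto simp: Ck_0)
next
  case (Suc n)
  have df: "\<forall>y\<in>V. f differentiable (at y)"
    using Suc.prems by (auto simp: Ck_Suc)
  have fn: "Ck n V f" using Ck_mono[OF _ Suc.prems(1)] by simp
  show ?case unfolding Ck_Suc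
  proof (intro conjI allI)
    show "\<forall>y\<in>V. (\<lambda>y. inverse (f y)) differentiable at y" using df assms(3)
      by auto
    fix v
    have fv: "Ck n V (pderiv_iter [v] f)" using Suc.prems(1) unfolding Ck_Suc by blast
    have "\<forall>y\<in>V. pderiv_iter [v] (\<lambda>y. inverse (f y)) y
        = (-1::real) *\<^sub>R (inverse (f y) *\<^sub>R (pderiv_iter [v] f y *\<^sub>R inverse (f y)))"
    proof
      fix y assume y: "y \<in> V"
      have "(f has_derivative frechet_derivative f (at y)) (at y)" using df y fd_works by blast
      from Deriv.has_derivative_inverse[OF _ this] assms(3) y
      have "((\<lambda>y. inverse (f y)) has_derivative
          (\<lambda>h. - (inverse (f y) * frechet_derivative f (at y) h * inverse (f y)))) (at y)"
        by blast
      then show "pderiv_iter [v] (\<lambda>y. inverse (f y)) y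
        = (-1::real) *\<^sub>R (inverse (f y) *\<^sub>R (pderiv_iter [v] f y *\<^sub>R inverse (f y)))"
        by (simp add: fd_eq)
    qed
    moreover have "Ck n V (\<lambda>y. (-1::real) *\<^sub>R (inverse (f y) *\<^sub>R (pderiv_iter [v] f y *\<^sub>R inverse (f y))))"
    proof -
      have i: "Ck n V (\<lambda>y. inverse (f y))" by (rule Suc.IH[OF fn])
      have "Ck n V (\<lambda>y. pderiv_iter [v] f y *\<^sub>R inverse (f y))"
        by (rule Ck_scaleR[OF assms(1) fv i])
      then have "Ck n V (\<lambda>y. inverse (f y) *\<^sub>R (pderiv_iter [v] f y *\<^sub>R inverse (f y)))"
        by (rule Ck_scaleR[OF assms(1) i])
      then show ?thesis by (rule Ck_scaleR[OF assms(1) Ck_const])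
    qed
    ultimately show "Ck n V (pderiv_iter [v] (\<lambda>y. inverse (f y)))"
      by (rule Ck_transfer[OF assms(1)])
  qed
qed

lemma Ck_sum:
  assumes "open V" "finite S" "\<forall>i\<in>S. Ck n V (f i)"
  shows "Ck n V (\<lambda>y. \<Sum>i\<in>S. f i y)"
  using assms(2,3)
proof (induction S rule: finite_induct)
  case empty then show ?case by (simp add: Ck_const)
next
  case (insert a S) then show ?case by (simp add: Ck_add[OF assms(1)])
qed


lemma smooth_transfer:
  assumes "open V" "\<forall>y\<in>V. F y = G y" "smooth_on V G"
  shows "smooth_on V F"
  using smooth_cong[OF assms(1,2)] assms(3) by simp

lemma smooth_const: "smooth_on V (\<lambda>_. c)"
  by (simp add: smooth_Ck Ck_const)

lemma smooth_add: "open V \<Longrightarrow> smooth_on V f \<Longrightarrow> smooth_on V g \<Longrightarrow> smooth_on V (\<lambda>y. f y + g y)"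
  by (simp add: smooth_Ck Ck_add)

lemma smooth_bl: "open V \<Longrightarrow> bounded_linear L \<Longrightarrow> smooth_on V f \<Longrightarrow> smooth_on V (\<lambda>y. L (f y))"
  by (simp add: smooth_Ck Ck_bl)

lemma smooth_scaleR: "open V \<Longrightarrow> smooth_on V f \<Longrightarrow> smooth_on V g \<Longrightarrow> smooth_on V (\<lambda>y. f y *\<^sub>R g y)"
  by (simp add: smooth_Ck Ck_scaleR)

lemma smooth_mult:
  fixes f g :: "'a::real_normed_vector \<Rightarrow> real"
  shows "open V \<Longrightarrow> smooth_on V f \<Longrightarrow> smooth_on V g \<Longrightarrow> smooth_on V (\<lambda>y. f y * g y)"
  using smooth_scaleR[of V f g] by simp

lemma smooth_inverse:
  fixes f :: "'a::real_normed_vector \<Rightarrow> real"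
  shows "open V \<Longrightarrow> smooth_on V f \<Longrightarrow> \<forall>y\<in>V. f y \<noteq> 0 \<Longrightarrow> smooth_on V (\<lambda>y. inverse (f y))"
  by (simp add: smooth_Ck Ck_inverse)

lemma smooth_sum: "open V \<Longrightarrow> finite S \<Longrightarrow> \<forall>i\<in>S. smooth_on V (f i) \<Longrightarrow> smooth_on V (\<lambda>y. \<Sum>i\<in>S. f i y)"
  by (simp add: smooth_Ck Ck_sum)

lemma smooth_diff:
  assumes "open V" "smooth_on V f" "smooth_on V g"
  shows "smooth_on V (\<lambda>y. f y - g y)"
proof -
  have "smooth_on V (\<lambda>y. f y + (-1::real) *\<^sub>R g y)"
    by (intro smooth_add[OF assms(1,2)] smooth_scaleR[OF assms(1) smooth_const assms(3)])
  then show ?thesis by simp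
qed

lemma smooth_inner: "open V \<Longrightarrow> smooth_on V F \<Longrightarrow> smooth_on V (\<lambda>y. F y \<bullet> k)"
  by (rule smooth_bl) (auto intro: bounded_linear_inner_left)

lemma smooth_pd: "smooth_on V f \<Longrightarrow> smooth_on V (pderiv_iter [v] f)"
  unfolding smooth_Ck using Ck_Suc by blast

lemma fd_basis:
  fixes f :: "'a::euclidean_space \<Rightarrow> 'b::real_normed_vector"
  assumes "f differentiable (at y)"
  shows "frechet_derivative f (at y) v = (\<Sum>b\<in>Basis. (v \<bullet> b) *\<^sub>R frechet_derivative f (at y) b)"
proof -
  have l: "linear (frechet_derivative f (at y))" using linear_frechet_derivative[OF assms] .
  have "frechet_derivative f (at y) v = frechet_derivative f (at y) (\<Sum>b\<in>Basis. (v \<bullet> b) *\<^sub>R b)"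
    by (simp add: euclidean_representation)
  also have "\<dots> = (\<Sum>b\<in>Basis. (v \<bullet> b) *\<^sub>R frechet_derivative f (at y) b)"
    by (simp add: linear_sum[OF l] linear_scale[OF l])
  finally show ?thesis .
qed

lemma smooth_lie_deriv:
  fixes Y :: "'a::euclidean_space \<Rightarrow> 'a"
  assumes "open V" "smooth_on V Y" "smooth_on V f"
  shows "smooth_on V (lie_deriv Y f)"
proof (rule smooth_transfer[OF assms(1)])
  show "\<forall>y\<in>V. lie_deriv Y f y = (\<Sum>b\<in>Basis. (Y y \<bullet> b) *\<^sub>R pderiv_iter [b] f y)"
  proof
    fix y assume y: "y \<in> V"
    show "lie_deriv Y f y = (\<Sum>b\<in>Basis. (Y y \<bullet> b) *\<^sub>R pderiv_iter [b] f y)"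
      using fd_basis[OF smooth_diff_at[OF assms(3) y], of "Y y"] by (simp add: lie_deriv_def)
  qed
  show "smooth_on V (\<lambda>y. \<Sum>b\<in>Basis. (Y y \<bullet> b) *\<^sub>R pderiv_iter [b] f y)"
  proof (rule smooth_sum[OF assms(1)], simp, intro ballI)
    fix b :: 'a
    show "smooth_on V (\<lambda>y. (Y y \<bullet> b) *\<^sub>R pderiv_iter [b] f y)"
      by (rule smooth_scaleR[OF assms(1) smooth_inner[OF assms(1,2)] smooth_pd[OF assms(3)]])
  qed
qed

lemma smooth_components:
  fixes F :: "'a::real_normed_vector \<Rightarrow> 'b::euclidean_space"
  assumes "open V" "\<forall>b\<in>Basis. smooth_on V (\<lambda>y. F y \<bullet> b)"
  shows "smooth_on V F"
proof (rule smooth_transfer[OF assms(1)])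
  show "\<forall>y\<in>V. F y = (\<Sum>b\<in>Basis. (F y \<bullet> b) *\<^sub>R b)" by (simp add: euclidean_representation)
  show "smooth_on V (\<lambda>y. \<Sum>b\<in>Basis. (F y \<bullet> b) *\<^sub>R b)"
    using assms by (intro smooth_sum) (auto intro: smooth_scaleR[OF assms(1) _ smooth_const])
qed

lemma fd_inner:
  assumes "F differentiable (at y)"
  shows "frechet_derivative (\<lambda>z. F z \<bullet> b) (at y) v = frechet_derivative F (at y) v \<bullet> b"
proof -
  have "((\<lambda>z. F z \<bullet> b) has_derivative (\<lambda>h. frechet_derivative F (at y) h \<bullet> b)) (at y)"
    by (rule bounded_linear.has_derivative[OF bounded_linear_inner_left fd_works[OF assms]])
  then show ?thesis by (rule fd_eq)
qed

lemma smooth_bracket: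
  fixes X Y :: "'a::euclidean_space \<Rightarrow> 'a"
  assumes "open V" "smooth_on V X" "smooth_on V Y"
  shows "smooth_on V (lie_bracket X Y)"
proof (rule smooth_components[OF assms(1)], intro ballI)
  fix b :: 'a assume b: "b \<in> Basis"
  show "smooth_on V (\<lambda>y. lie_bracket X Y y \<bullet> b)"
  proof (rule smooth_transfer[OF assms(1)])
    show "\<forall>y\<in>V. lie_bracket X Y y \<bullet> b = lie_deriv X (\<lambda>z. Y z \<bullet> b) y - lie_deriv Y (\<lambda>z. X z \<bullet> b) y"
      using smooth_diff_at[OF assms(2)] smooth_diff_at[OF assms(3)]
      by (simp add: lie_bracket_def lie_deriv_def fd_inner inner_diff_left)
    show "smooth_on V (\<lambda>y. lie_deriv X (\<lambda>z. Y z \<bullet> b) y - lie_deriv Y (\<lambda>z. X z \<bullet> b) y)"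
      using assms by (intro smooth_diff smooth_lie_deriv smooth_inner) auto
  qed
qed

lemma smooth_imp_cont: "smooth_on V f \<Longrightarrow> y \<in> V \<Longrightarrow> isCont f y"
  using smooth_diff_at differentiable_imp_continuous_within by blast

lemma foldr_smooth:
  fixes f :: "'a::euclidean_space \<Rightarrow> real"
  assumes "open V" "\<forall>Y\<in>set Ys. smooth_on V Y" "smooth_on V f"
  shows "smooth_on V (foldr lie_deriv Ys f)"
  using assms(2) by (induction Ys) (auto intro: smooth_lie_deriv[OF assms(1)] assms(3))

lemma foldr_cong:
  fixes f :: "'a::euclidean_space \<Rightarrow> real"
  assumes "open V" "\<forall>z\<in>V. f z = g z"
  shows "\<forall>y\<in>V. foldr lie_deriv Ys f y = foldr lie_deriv Ys g y"
proof (induction Ys)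
  case Nil then show ?case using assms by simp
next
  case (Cons Y Ys)
  show ?case
  proof
    fix y assume y: "y \<in> V"
    have "frechet_derivative (foldr lie_deriv Ys f) (at y) = frechet_derivative (foldr lie_deriv Ys g) (at y)"
      by (rule fd_cong[OF assms(1) y Cons])
    then show "foldr lie_deriv (Y # Ys) f y = foldr lie_deriv (Y # Ys) g y"
      by (simp add: lie_deriv_def)
  qed
qed

lemma foldr_zero: "foldr lie_deriv Ys (\<lambda>_. 0) = (\<lambda>_. 0)"
  by (induction Ys) (auto simp: lie_deriv_def)

lemma foldr_add:
  fixes f :: "'a::euclidean_space \<Rightarrow> real"
  assumes "open V" "\<forall>Y\<in>set Ys. smooth_on V Y" "smooth_on V f" "smooth_on V g"
  shows "\<forall>y\<in>V. foldr lie_deriv Ys (\<lambda>z. f z + g z) y = foldr lie_deriv Ys f y + foldr lie_deriv Ys g y"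
  using assms(2)
proof (induction Ys)
  case Nil then show ?case by simp
next
  case (Cons Y Ys)
  have sY: "\<forall>Y\<in>set Ys. smooth_on V Y" using Cons.prems by simp
  have sf: "smooth_on V (foldr lie_deriv Ys f)" by (rule foldr_smooth[OF assms(1) sY assms(3)])
  have sg: "smooth_on V (foldr lie_deriv Ys g)" by (rule foldr_smooth[OF assms(1) sY assms(4)])
  show ?case
  proof
    fix y assume y: "y \<in> V"
    have "frechet_derivative (foldr lie_deriv Ys (\<lambda>z. f z + g z)) (at y)
        = frechet_derivative (\<lambda>z. foldr lie_deriv Ys f z + foldr lie_deriv Ys g z) (at y)"
      by (rule fd_cong[OF assms(1) y Cons.IH[OF sY]])
    also have "\<dots> = (\<lambda>h. frechet_derivative (foldr lie_deriv Ys f) (at y) h + frechet_derivative (foldr lie_deriv Ys g) (at y) h)"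
      by (rule frechet_derivative_at[symmetric], intro has_derivative_add fd_works
          smooth_diff_at[OF sf y] smooth_diff_at[OF sg y])
    finally show "foldr lie_deriv (Y # Ys) (\<lambda>z. f z + g z) y = foldr lie_deriv (Y # Ys) f y + foldr lie_deriv (Y # Ys) g y"
      by (simp add: lie_deriv_def)
  qed
qed

lemma foldr_scale:
  fixes f :: "'a::euclidean_space \<Rightarrow> real"
  assumes "open V" "\<forall>Y\<in>set Ys. smooth_on V Y" "smooth_on V f"
  shows "\<forall>y\<in>V. foldr lie_deriv Ys (\<lambda>z. c * f z) y = c * foldr lie_deriv Ys f y"
  using assms(2)
proof (induction Ys)
  case Nil then show ?case by simp
next
  case (Cons Y Ys)
  have sY: "\<forall>Y\<in>set Ys. smooth_on V Y" using Cons.prems by simp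
  have sf: "smooth_on V (foldr lie_deriv Ys f)" by (rule foldr_smooth[OF assms(1) sY assms(3)])
  show ?case
  proof
    fix y assume y: "y \<in> V"
    have "frechet_derivative (foldr lie_deriv Ys (\<lambda>z. c * f z)) (at y)
        = frechet_derivative (\<lambda>z. c * foldr lie_deriv Ys f z) (at y)"
      by (rule fd_cong[OF assms(1) y Cons.IH[OF sY]])
    also have "\<dots> = (\<lambda>h. c * frechet_derivative (foldr lie_deriv Ys f) (at y) h)"
      by (rule frechet_derivative_at[symmetric], intro has_derivative_mult_right fd_works
          smooth_diff_at[OF sf y])
    finally show "foldr lie_deriv (Y # Ys) (\<lambda>z. c * f z) y = c * foldr lie_deriv (Y # Ys) f y"
      by (simp add: lie_deriv_def)
  qed
qed

lemma foldr_diff: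
  fixes f :: "'a::euclidean_space \<Rightarrow> real"
  assumes "open V" "\<forall>Y\<in>set Ys. smooth_on V Y" "smooth_on V f" "smooth_on V g"
  shows "\<forall>y\<in>V. foldr lie_deriv Ys (\<lambda>z. f z - g z) y = foldr lie_deriv Ys f y - foldr lie_deriv Ys g y"
proof -
  have sg: "smooth_on V (\<lambda>z. (-1) * g z)"
    using smooth_mult[OF assms(1) smooth_const assms(4)] .
  have "\<forall>y\<in>V. foldr lie_deriv Ys (\<lambda>z. f z + (-1) * g z) y = foldr lie_deriv Ys f y + foldr lie_deriv Ys (\<lambda>z. (-1) * g z) y"
    by (rule foldr_add[OF assms(1,2,3) sg])
  moreover have "\<forall>y\<in>V. foldr lie_deriv Ys (\<lambda>z. (-1) * g z) y = (-1) * foldr lie_deriv Ys g y"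
    by (rule foldr_scale[OF assms(1,2,4)])
  ultimately show ?thesis by simp
qed

lemma foldr_sum:
  fixes f :: "'i \<Rightarrow> 'a::euclidean_space \<Rightarrow> real"
  assumes "open V" "\<forall>Y\<in>set Ys. smooth_on V Y" "finite S" "\<forall>i\<in>S. smooth_on V (f i)"
  shows "\<forall>y\<in>V. foldr lie_deriv Ys (\<lambda>z. \<Sum>i\<in>S. f i z) y = (\<Sum>i\<in>S. foldr lie_deriv Ys (f i) y)"
  using assms(3,4)
proof (induction S rule: finite_induct)
  case empty then show ?case by (simp add: foldr_zero)
next
  case (insert a S)
  have s1: "smooth_on V (f a)" and s2: "smooth_on V (\<lambda>z. \<Sum>i\<in>S. f i z)"
    using insert by (auto intro: smooth_sum[OF assms(1)])
  show ?case using foldr_add[OF assms(1,2) s1 s2] insert by simp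
qed


lemma elim_alg:
  fixes Zs :: "nat \<Rightarrow> 'a::euclidean_space" and Zn k :: 'a and p :: real
  shows "(\<Sum>i<n. d i *\<^sub>R (Zs i - ((Zs i \<bullet> k) / p) *\<^sub>R Zn))
       = (\<Sum>i<n. d i *\<^sub>R Zs i) - (((\<Sum>i<n. d i *\<^sub>R Zs i) \<bullet> k) / p) *\<^sub>R Zn"
proof -
  have "(\<Sum>i<n. d i *\<^sub>R (Zs i - ((Zs i \<bullet> k) / p) *\<^sub>R Zn))
      = (\<Sum>i<n. d i *\<^sub>R Zs i) - (\<Sum>i<n. (d i * (Zs i \<bullet> k) / p) *\<^sub>R Zn)"
    by (simp add: scaleR_right_diff_distrib sum_subtractf)
  also have "(\<Sum>i<n. (d i * (Zs i \<bullet> k) / p) *\<^sub>R Zn) = (\<Sum>i<n. d i * (Zs i \<bullet> k) / p) *\<^sub>R Zn"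
    by (simp add: scaleR_sum_left)
  also have "(\<Sum>i<n. d i * (Zs i \<bullet> k) / p) = ((\<Sum>i<n. d i *\<^sub>R Zs i) \<bullet> k) / p"
    by (simp add: inner_sum_left sum_divide_distrib)
  finally show ?thesis .
qed

lemma coef_elim:
  fixes x :: "'a::euclidean_space"
  shows "\<forall>(Zs :: nat \<Rightarrow> 'a \<Rightarrow> 'a) V A. open A \<and> x \<in> A \<and> (\<forall>i<n. smooth_on A (Zs i)) \<and> smooth_on A V
    \<and> (\<forall>y\<in>A. \<forall>c. (\<Sum>i<n. c i *\<^sub>R Zs i y) = 0 \<longrightarrow> (\<forall>i<n. c i = 0))
    \<and> (\<forall>y\<in>A. \<exists>c. V y = (\<Sum>i<n. c i *\<^sub>R Zs i y))
    \<longrightarrow> (\<exists>A' c. open A' \<and> x \<in> A' \<and> A' \<subseteq> A \<and> (\<forall>i<n. smooth_on A' (c i))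
          \<and> (\<forall>y\<in>A'. V y = (\<Sum>i<n. c i y *\<^sub>R Zs i y)))"
proof (induction n)
  case 0
  show ?case
  proof (intro allI impI)
    fix Zs :: "nat \<Rightarrow> 'a \<Rightarrow> 'a" and V A
    assume a: "open A \<and> x \<in> A \<and> (\<forall>i<0. smooth_on A (Zs i)) \<and> smooth_on A V
      \<and> (\<forall>y\<in>A. \<forall>c. (\<Sum>i<0. c i *\<^sub>R Zs i y) = 0 \<longrightarrow> (\<forall>i<0. c i = 0))
      \<and> (\<forall>y\<in>A. \<exists>c. V y = (\<Sum>i<0. c i *\<^sub>R Zs i y))"
    show "\<exists>A' c. open A' \<and> x \<in> A' \<and> A' \<subseteq> A \<and> (\<forall>i<0. smooth_on A' (c i))
          \<and> (\<forall>y\<in>A'. V y = (\<Sum>i<0. c i y *\<^sub>R Zs i y))"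
      using a by (intro exI[of _ A] exI[of _ "\<lambda>_ _. 0"]) auto
  qed
next
  case (Suc n)
  show ?case
  proof (intro allI impI)
    fix Zs :: "nat \<Rightarrow> 'a \<Rightarrow> 'a" and V A
    assume a: "open A \<and> x \<in> A \<and> (\<forall>i<Suc n. smooth_on A (Zs i)) \<and> smooth_on A V
      \<and> (\<forall>y\<in>A. \<forall>c. (\<Sum>i<Suc n. c i *\<^sub>R Zs i y) = 0 \<longrightarrow> (\<forall>i<Suc n. c i = 0))
      \<and> (\<forall>y\<in>A. \<exists>c. V y = (\<Sum>i<Suc n. c i *\<^sub>R Zs i y))"
    have oA: "open A" and xA: "x \<in> A" and sZ: "\<forall>i<Suc n. smooth_on A (Zs i)" and sV: "smooth_on A V"
      and ind: "\<forall>y\<in>A. \<forall>c. (\<Sum>i<Suc n. c i *\<^sub>R Zs i y) = 0 \<longrightarrow> (\<forall>i<Suc n. c i = 0)"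
      and spn: "\<forall>y\<in>A. \<exists>c. V y = (\<Sum>i<Suc n. c i *\<^sub>R Zs i y)"
      using a by auto
    have Znx: "Zs n x \<noteq> 0"
    proof
      assume z: "Zs n x = 0"
      have "(\<Sum>i<Suc n. (if i = n then 1 else 0) *\<^sub>R Zs i x) = 0"
        using z by simp
      from ind[rule_format, OF xA this, of n] show False by simp
    qed
    then obtain k where k: "k \<in> Basis" "Zs n x \<bullet> k \<noteq> 0"
      by (metis euclidean_all_zero_iff)
    define p where "p = (\<lambda>y. Zs n y \<bullet> k)"
    have sZn: "smooth_on A (Zs n)" using sZ by simp
    have sp: "smooth_on A p" unfolding p_def by (rule smooth_inner[OF oA sZn])
    have "isCont p x" by (rule smooth_imp_cont[OF sp xA])
    then obtain e where e: "e > 0" "\<forall>y. dist x y < e \<longrightarrow> p y \<noteq> 0"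
      using continuous_at_avoid[of x p 0] k(2) unfolding p_def by auto
    define A1 where "A1 = A \<inter> ball x e"
    have oA1: "open A1" and xA1: "x \<in> A1" and A1A: "A1 \<subseteq> A" using oA xA e(1) by (auto simp: A1_def)
    have pnz: "\<forall>y\<in>A1. p y \<noteq> 0" using e(2) by (auto simp: A1_def)
    have sp1: "smooth_on A1 p" using smooth_subset[OF A1A sp] .
    have sip: "smooth_on A1 (\<lambda>y. inverse (p y))" by (rule smooth_inverse[OF oA1 sp1 pnz])
    have sZn1: "smooth_on A1 (Zs n)" using smooth_subset[OF A1A sZn] .
    define Z' where "Z' = (\<lambda>i y. Zs i y - ((Zs i y \<bullet> k) / p y) *\<^sub>R Zs n y)"
    define V' where "V' = (\<lambda>y. V y - ((V y \<bullet> k) / p y) *\<^sub>R Zs n y)"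
    have sproj: "smooth_on A1 (\<lambda>y. F y - ((F y \<bullet> k) / p y) *\<^sub>R Zs n y)" if sF: "smooth_on A1 F" for F
    proof -
      have "smooth_on A1 (\<lambda>y. (F y \<bullet> k) * inverse (p y))"
        by (rule smooth_mult[OF oA1 smooth_inner[OF oA1 sF] sip])
      then have "smooth_on A1 (\<lambda>y. ((F y \<bullet> k) * inverse (p y)) *\<^sub>R Zs n y)"
        by (rule smooth_scaleR[OF oA1 _ sZn1])
      then have "smooth_on A1 (\<lambda>y. F y - ((F y \<bullet> k) * inverse (p y)) *\<^sub>R Zs n y)"
        by (rule smooth_diff[OF oA1 sF])
      then show ?thesis by (simp add: divide_inverse)
    qed
    have sZ': "\<forall>i<n. smooth_on A1 (Z' i)" unfolding Z'_def
      using sZ A1A by (auto intro!: sproj smooth_subset[of A1 A])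
    have sV': "smooth_on A1 V'" unfolding V'_def by (rule sproj[OF smooth_subset[OF A1A sV]])
    have ind': "\<forall>y\<in>A1. \<forall>c. (\<Sum>i<n. c i *\<^sub>R Z' i y) = 0 \<longrightarrow> (\<forall>i<n. c i = 0)"
    proof (intro ballI allI impI)
      fix y c i assume y: "y \<in> A1" and s0: "(\<Sum>i<n. c i *\<^sub>R Z' i y) = 0" and i: "i < n"
      define c' where "c' = (\<lambda>j. if j < n then c j else - (((\<Sum>i<n. c i *\<^sub>R Zs i y) \<bullet> k) / p y))"
      have "(\<Sum>j<Suc n. c' j *\<^sub>R Zs j y) = (\<Sum>i<n. c i *\<^sub>R Z' i y)"
        unfolding Z'_def elim_alg by (simp add: c'_def)
      then have "(\<Sum>j<Suc n. c' j *\<^sub>R Zs j y) = 0" using s0 by simp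
      then have "c' i = 0" using ind y A1A i by auto
      then show "c i = 0" using i by (simp add: c'_def)
    qed
    have spn': "\<forall>y\<in>A1. \<exists>c. V' y = (\<Sum>i<n. c i *\<^sub>R Z' i y)"
    proof
      fix y assume y: "y \<in> A1"
      obtain d where d: "V y = (\<Sum>i<Suc n. d i *\<^sub>R Zs i y)" using spn y A1A by blast
      define S where "S = (\<Sum>i<n. d i *\<^sub>R Zs i y)"
      have V: "V y = S + d n *\<^sub>R Zs n y" using d by (simp add: S_def)
      have py: "p y \<noteq> 0" using pnz y by auto
      have "V' y = S - ((S \<bullet> k) / p y) *\<^sub>R Zs n y"
      proof -
        have "V' y = S + d n *\<^sub>R Zs n y - ((S \<bullet> k + d n * p y) / p y) *\<^sub>R Zs n y"
          by (simp add: V'_def V inner_add_left p_def)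
        also have "((S \<bullet> k + d n * p y) / p y) = (S \<bullet> k) / p y + d n"
          using py by (simp add: field_simps)
        finally show ?thesis by (simp add: scaleR_left_distrib)
      qed
      also have "\<dots> = (\<Sum>i<n. d i *\<^sub>R Z' i y)"
        unfolding Z'_def elim_alg S_def by simp
      finally show "\<exists>c. V' y = (\<Sum>i<n. c i *\<^sub>R Z' i y)" by blast
    qed
    obtain A2 c' where A2: "open A2" "x \<in> A2" "A2 \<subseteq> A1" "\<forall>i<n. smooth_on A2 (c' i)"
      "\<forall>y\<in>A2. V' y = (\<Sum>i<n. c' i y *\<^sub>R Z' i y)"
      using Suc.IH[rule_format, of A1 Z' V'] oA1 xA1 sZ' sV' ind' spn' by blast
    define cn where "cn = (\<lambda>y. (V y \<bullet> k - (\<Sum>i<n. c' i y *\<^sub>R Zs i y) \<bullet> k) / p y)"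
    define c where "c = (\<lambda>i. if i < n then c' i else cn)"
    have "smooth_on A2 cn"
    proof -
      have sVA2: "smooth_on A2 V" using smooth_subset[OF _ sV] A2(3) A1A by blast
      have "\<forall>i\<in>{..<n}. smooth_on A2 (\<lambda>y. c' i y *\<^sub>R Zs i y)"
      proof
        fix i assume i: "i \<in> {..<n}"
        have A2A: "A2 \<subseteq> A" using A2(3) A1A by blast
        have "i < Suc n" using i by simp
        then have "smooth_on A2 (Zs i)" using sZ smooth_subset[OF A2A] by blast
        then show "smooth_on A2 (\<lambda>y. c' i y *\<^sub>R Zs i y)"
          using A2(4) i by (intro smooth_scaleR[OF A2(1)]) auto
      qed
      then have sS: "smooth_on A2 (\<lambda>y. \<Sum>i<n. c' i y *\<^sub>R Zs i y)"
        by (rule smooth_sum[OF A2(1) finite_lessThan])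
      have "smooth_on A2 (\<lambda>y. (V y \<bullet> k - (\<Sum>i<n. c' i y *\<^sub>R Zs i y) \<bullet> k) * inverse (p y))"
        by (rule smooth_mult[OF A2(1) smooth_diff[OF A2(1) smooth_inner[OF A2(1) sVA2]
              smooth_inner[OF A2(1) sS]] smooth_subset[OF A2(3) sip]])
      then show ?thesis unfolding cn_def by (simp add: divide_inverse)
    qed
    then have sc: "\<forall>i<Suc n. smooth_on A2 (c i)" using A2(4) by (simp add: c_def less_Suc_eq)
    have rep: "\<forall>y\<in>A2. V y = (\<Sum>i<Suc n. c i y *\<^sub>R Zs i y)"
    proof
      fix y assume y: "y \<in> A2"
      have py: "p y \<noteq> 0" using pnz y A2(3) by auto
      define S where "S = (\<Sum>i<n. c' i y *\<^sub>R Zs i y)"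
      have "V' y = S - ((S \<bullet> k) / p y) *\<^sub>R Zs n y"
        using A2(5) y unfolding Z'_def elim_alg S_def by simp
      then have "V y = S - ((S \<bullet> k) / p y) *\<^sub>R Zs n y + ((V y \<bullet> k) / p y) *\<^sub>R Zs n y"
        unfolding V'_def by (simp add: algebra_simps)
      also have "\<dots> = S + cn y *\<^sub>R Zs n y"
        by (simp add: cn_def S_def diff_divide_distrib scaleR_diff_left)
      also have "\<dots> = (\<Sum>i<Suc n. c i y *\<^sub>R Zs i y)"
        by (simp add: c_def S_def)
      finally show "V y = (\<Sum>i<Suc n. c i y *\<^sub>R Zs i y)" .
    qed
    show "\<exists>A' c. open A' \<and> x \<in> A' \<and> A' \<subseteq> A \<and> (\<forall>i<Suc n. smooth_on A' (c i))
          \<and> (\<forall>y\<in>A'. V y = (\<Sum>i<Suc n. c i y *\<^sub>R Zs i y))"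
      using A2 A1A sc rep by (intro exI[of _ A2] exI[of _ c]) auto
  qed
qed


lemma indep_family:
  fixes Zy :: "'i \<Rightarrow> 'a::real_vector"
  assumes "finite I" "inj_on Zy I" "independent (Zy ` I)" "(\<Sum>a\<in>I. c a *\<^sub>R Zy a) = 0"
  shows "\<forall>a\<in>I. c a = 0"
proof -
  define u where "u = (\<lambda>v. c (the_inv_into I Zy v))"
  have "(\<Sum>v\<in>Zy ` I. u v *\<^sub>R v) = (\<Sum>a\<in>I. u (Zy a) *\<^sub>R Zy a)"
    by (rule sum.reindex[OF assms(2), unfolded comp_def])
  also have "\<dots> = (\<Sum>a\<in>I. c a *\<^sub>R Zy a)"
    by (rule sum.cong) (auto simp: u_def the_inv_into_f_f[OF assms(2)])
  finally have "(\<Sum>v\<in>Zy ` I. u v *\<^sub>R v) = 0" using assms(4) by simp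
  then have "\<forall>v\<in>Zy ` I. u v = 0" using assms(3) dependent_finite[of "Zy ` I"] assms(1) by auto
  then show ?thesis by (auto simp: u_def the_inv_into_f_f[OF assms(2)])
qed

lemma span_family:
  fixes Zy :: "'i \<Rightarrow> 'a::real_vector"
  assumes "finite J" "inj_on Zy J" "v \<in> span (Zy ` J)"
  shows "\<exists>c. v = (\<Sum>a\<in>J. c a *\<^sub>R Zy a)"
proof -
  obtain u where u: "v = (\<Sum>w\<in>Zy ` J. u w *\<^sub>R w)"
    using assms(3) span_finite[of "Zy ` J"] assms(1) by auto
  also have "\<dots> = (\<Sum>a\<in>J. u (Zy a) *\<^sub>R Zy a)"
    by (rule sum.reindex[OF assms(2), unfolded comp_def])
  finally show ?thesis by (rule exI[of _ "\<lambda>a. u (Zy a)"])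
qed

lemma frame_idx_Sigma: "frame_idx r \<kappa> s = Sigma {1..min s \<kappa>} (\<lambda>t. {..<r t})"
  unfolding frame_idx_def by auto

lemma finite_frame_idx: "finite (frame_idx r \<kappa> s)"
  unfolding frame_idx_Sigma by auto

locale fs =
  fixes U :: "'a::euclidean_space set" and D :: "'a \<Rightarrow> 'a set" and x :: 'a
    and \<kappa> :: nat and r :: "nat \<Rightarrow> nat" and Z :: "nat \<Rightarrow> nat \<Rightarrow> 'a \<Rightarrow> 'a" and W :: "'a set"
  assumes openU: "open U" and xU: "x \<in> U"
    and oW: "open W" and xW: "x \<in> W" and WU: "W \<subseteq> U" and kpos: "1 \<le> \<kappa>"
    and kappa: "\<forall>y\<in>U. flag U D \<kappa> y = UNIV"
    and Z_sec: "\<forall>j l. 1 \<le> j \<and> j \<le> \<kappa> \<and> l < r j \<longrightarrow> section_on U (flag U D j) W (Z j l)"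
    and Z_frame: "\<forall>s\<ge>1. \<forall>y\<in>W.
        inj_on (\<lambda>(t, l). Z t l y) (frame_idx r \<kappa> s) \<and>
        independent ((\<lambda>(t, l). Z t l y) ` frame_idx r \<kappa> s) \<and>
        span ((\<lambda>(t, l). Z t l y) ` frame_idx r \<kappa> s) = flag U D s y"
begin

definition I :: "(nat \<times> nat) set" where "I = frame_idx r \<kappa> \<kappa>"
definition Zf :: "nat \<times> nat \<Rightarrow> 'a \<Rightarrow> 'a" where "Zf a = Z (fst a) (snd a)"
definition ls :: "('a \<Rightarrow> 'a) \<Rightarrow> bool" where "ls Y \<longleftrightarrow> local_section U D x Y"
definition van :: "int \<Rightarrow> ('a \<Rightarrow> real) \<Rightarrow> bool" where
  "van m g \<longleftrightarrow> (\<forall>Ys. int (length Ys) < m \<and> (\<forall>Y\<in>set Ys. ls Y) \<longrightarrow> foldr lie_deriv Ys g x = 0)"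
definition coef :: "('a \<Rightarrow> 'a) \<Rightarrow> nat \<times> nat \<Rightarrow> 'a \<Rightarrow> real" where
  "coef V a y = (SOME c. V y = (\<Sum>b\<in>I. c b *\<^sub>R Zf b y)) a"

lemma finI: "finite I" unfolding I_def by (rule finite_frame_idx)

lemma I_iff: "a \<in> I \<longleftrightarrow> 1 \<le> fst a \<and> fst a \<le> \<kappa> \<and> snd a < r (fst a)"
  unfolding I_def frame_idx_def by (cases a) auto

lemma frame_idx_iff: "a \<in> frame_idx r \<kappa> s \<longleftrightarrow> a \<in> I \<and> fst a \<le> s"
  unfolding I_def frame_idx_def by (cases a) auto

lemma Zf_eq: "(\<lambda>(t, l). Z t l y) = (\<lambda>a. Zf a y)"
  by (auto simp: Zf_def)

lemma smooth_Zf: "a \<in> I \<Longrightarrow> smooth_on W (Zf a)"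
  using Z_sec unfolding I_iff Zf_def section_on_def by (cases a) auto

lemma Zf_sec: "a \<in> I \<Longrightarrow> section_on U (flag U D (fst a)) W (Zf a)"
  using Z_sec unfolding I_iff Zf_def by (cases a) auto

lemma indep: "y \<in> W \<Longrightarrow> (\<Sum>a\<in>I. c a *\<^sub>R Zf a y) = 0 \<Longrightarrow> \<forall>a\<in>I. c a = 0"
  using Z_frame kpos indep_family[OF finI, of "\<lambda>a. Zf a y" c] unfolding I_def Zf_eq by auto

lemma rep_supp:
  assumes "y \<in> W" "1 \<le> s" "v \<in> flag U D s y"
  shows "\<exists>c. v = (\<Sum>a\<in>I. c a *\<^sub>R Zf a y) \<and> (\<forall>a\<in>I. s < fst a \<longrightarrow> c a = 0)"
proof -
  let ?J = "frame_idx r \<kappa> s"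
  have inj: "inj_on (\<lambda>a. Zf a y) ?J" and sp: "span ((\<lambda>a. Zf a y) ` ?J) = flag U D s y"
    using Z_frame assms(1,2) unfolding Zf_eq by auto
  obtain c where c: "v = (\<Sum>a\<in>?J. c a *\<^sub>R Zf a y)"
    using span_family[OF finite_frame_idx inj] assms(3) sp by auto
  have JI: "?J \<subseteq> I" using frame_idx_iff by auto
  have "(\<Sum>a\<in>?J. c a *\<^sub>R Zf a y) = (\<Sum>a\<in>I. (if a \<in> ?J then c a else 0) *\<^sub>R Zf a y)"
    by (rule sum.mono_neutral_cong_left[OF finI JI]) auto
  then show ?thesis using c frame_idx_iff
    by (intro exI[of _ "\<lambda>a. if a \<in> ?J then c a else 0"]) auto
qed

lemma rep_all: "y \<in> W \<Longrightarrow> \<exists>c. v = (\<Sum>a\<in>I. c a *\<^sub>R Zf a y)"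
  using rep_supp[of y \<kappa> v] kappa WU kpos by blast

lemma coef_rep: "y \<in> W \<Longrightarrow> V y = (\<Sum>a\<in>I. coef V a y *\<^sub>R Zf a y)"
  unfolding coef_def using someI_ex[OF rep_all[of y "V y"]] by simp

lemma coef_unique:
  assumes "y \<in> W" "V y = (\<Sum>a\<in>I. c a *\<^sub>R Zf a y)" "a \<in> I"
  shows "coef V a y = c a"
proof -
  have "(\<Sum>a\<in>I. (coef V a y - c a) *\<^sub>R Zf a y) = 0"
    using coef_rep[OF assms(1), of V] assms(2) by (simp add: scaleR_diff_left sum_subtractf)
  then have "\<forall>b\<in>I. coef V b y - c b = 0" by (rule indep[OF assms(1)])
  then show ?thesis using assms(3) by simp
qed

lemma coef_supp:
  assumes "y \<in> W" "1 \<le> s" "V y \<in> flag U D s y" "a \<in> I" "s < fst a"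
  shows "coef V a y = 0"
proof -
  obtain c where c: "V y = (\<Sum>a\<in>I. c a *\<^sub>R Zf a y)" "\<forall>a\<in>I. s < fst a \<longrightarrow> c a = 0"
    using rep_supp[OF assms(1-3)] by blast
  show ?thesis using coef_unique[of y V c a, OF assms(1) c(1) assms(4)] c(2) assms(4,5) by simp
qed

lemma coef_zero:
  assumes "y \<in> W" "V y = 0" "a \<in> I"
  shows "coef V a y = 0"
  using coef_unique[OF assms(1), of V "\<lambda>_. 0"] assms by simp

lemma coef_smooth:
  assumes "open A" "x \<in> A" "smooth_on A V" "a \<in> I"
  shows "\<exists>A'. open A' \<and> x \<in> A' \<and> A' \<subseteq> A \<inter> W \<and> smooth_on A' (coef V a)"
proof -
  obtain e where e: "bij_betw e {0..<card I} I" using ex_bij_betw_nat_finite[OF finI] by blast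
  define N where "N = card I"
  have e': "bij_betw e {..<N} I" using e by (simp add: N_def atLeast0LessThan)
  have inj: "inj_on e {..<N}" and eI: "\<And>i. i < N \<Longrightarrow> e i \<in> I"
    using e' by (auto simp: bij_betw_def)
  have ie: "\<And>b. b \<in> I \<Longrightarrow> inv_into {..<N} e b < N \<and> e (inv_into {..<N} e b) = b"
    using e' by (metis bij_betw_def bij_betw_inv_into_left f_inv_into_f inv_into_into lessThan_iff)
  have ie2: "\<And>i. i < N \<Longrightarrow> inv_into {..<N} e (e i) = i"
    using inv_into_f_f[OF inj] by simp
  define Zs where "Zs = (\<lambda>i. Zf (e i))"
  have reidx: "(\<Sum>b\<in>I. F b) = (\<Sum>i<N. F (e i))" for F :: "nat \<times> nat \<Rightarrow> 'a"
    using sum.reindex_bij_betw[OF e', of F] by simp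
  let ?A = "A \<inter> W"
  have oA: "open ?A" using assms(1) oW by auto
  have xA: "x \<in> ?A" using assms(2) xW by auto
  have sZs: "\<forall>i<N. smooth_on ?A (Zs i)"
  proof (intro allI impI)
    fix i assume "i < N"
    then have "smooth_on W (Zf (e i))" using smooth_Zf eI by blast
    then show "smooth_on ?A (Zs i)" unfolding Zs_def by (rule smooth_subset[rotated]) auto
  qed
  have sV: "smooth_on ?A V" using smooth_subset[OF _ assms(3)] by blast
  have ind: "\<forall>y\<in>?A. \<forall>c. (\<Sum>i<N. c i *\<^sub>R Zs i y) = 0 \<longrightarrow> (\<forall>i<N. c i = 0)"
  proof (intro ballI allI impI)
    fix y c i assume y: "y \<in> ?A" and s: "(\<Sum>i<N. c i *\<^sub>R Zs i y) = 0" and i: "i < N"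
    have "(\<Sum>b\<in>I. c (inv_into {..<N} e b) *\<^sub>R Zf b y) = (\<Sum>i<N. c i *\<^sub>R Zs i y)"
      unfolding reidx by (simp add: ie2 Zs_def)
    then have "(\<Sum>b\<in>I. c (inv_into {..<N} e b) *\<^sub>R Zf b y) = 0" using s by simp
    then have "\<forall>b\<in>I. c (inv_into {..<N} e b) = 0" using y by (intro indep) auto
    then show "c i = 0" using eI[OF i] ie2[OF i] by metis
  qed
  have spn: "\<forall>y\<in>?A. \<exists>c. V y = (\<Sum>i<N. c i *\<^sub>R Zs i y)"
  proof
    fix y assume y: "y \<in> ?A"
    obtain c where "V y = (\<Sum>b\<in>I. c b *\<^sub>R Zf b y)" using rep_all[of y "V y"] y by blast
    then have "V y = (\<Sum>i<N. c (e i) *\<^sub>R Zs i y)" unfolding reidx Zs_def .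
    then show "\<exists>c. V y = (\<Sum>i<N. c i *\<^sub>R Zs i y)" by (rule exI[of _ "\<lambda>i. c (e i)"])
  qed
  obtain A' c where A': "open A'" "x \<in> A'" "A' \<subseteq> ?A" "\<forall>i<N. smooth_on A' (c i)"
    "\<forall>y\<in>A'. V y = (\<Sum>i<N. c i y *\<^sub>R Zs i y)"
    using coef_elim[where x=x and n=N, rule_format, where Zs=Zs and V=V and A="?A"] oA xA sZs sV ind spn by blast
  have "\<forall>y\<in>A'. coef V a y = c (inv_into {..<N} e a) y"
  proof
    fix y assume y: "y \<in> A'"
    have "V y = (\<Sum>b\<in>I. c (inv_into {..<N} e b) y *\<^sub>R Zf b y)"
      unfolding reidx using A'(5) y by (simp add: ie2 Zs_def)
    then show "coef V a y = c (inv_into {..<N} e a) y"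
      using coef_unique[of y V _ a] y A'(3) assms(4) by auto
  qed
  moreover have "smooth_on A' (c (inv_into {..<N} e a))" using A'(4) ie[OF assms(4)] by blast
  ultimately have "smooth_on A' (coef V a)" using smooth_transfer[OF A'(1)] by blast
  then show ?thesis using A' by blast
qed

end


lemma sum_swap_alg:
  fixes g :: "'i \<Rightarrow> real" and h :: "'i \<Rightarrow> 'j \<Rightarrow> real" and Zb :: "'j \<Rightarrow> 'a::real_vector"
  assumes "finite I" "finite J"
  shows "(\<Sum>a\<in>I. g a *\<^sub>R (\<Sum>b\<in>J. h a b *\<^sub>R Zb b)) = (\<Sum>b\<in>J. (\<Sum>a\<in>I. g a * h a b) *\<^sub>R Zb b)"
proof -
  have "(\<Sum>a\<in>I. g a *\<^sub>R (\<Sum>b\<in>J. h a b *\<^sub>R Zb b)) = (\<Sum>a\<in>I. \<Sum>b\<in>J. (g a * h a b) *\<^sub>R Zb b)"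
    by (simp add: scaleR_sum_right)
  also have "\<dots> = (\<Sum>b\<in>J. \<Sum>a\<in>I. (g a * h a b) *\<^sub>R Zb b)" by (rule sum.swap)
  also have "\<dots> = (\<Sum>b\<in>J. (\<Sum>a\<in>I. g a * h a b) *\<^sub>R Zb b)" by (simp add: scaleR_sum_left)
  finally show ?thesis .
qed

lemma section_on_restrict:
  "section_on U E V F \<Longrightarrow> open V' \<Longrightarrow> V' \<subseteq> V \<Longrightarrow> section_on U E V' F"
  unfolding section_on_def using smooth_subset by blast

lemma lie_bracket_antisym: "lie_bracket X Y y = - lie_bracket Y X y"
  unfolding lie_bracket_def by simp

lemma smooth_Int1: "smooth_on A f \<Longrightarrow> smooth_on (A \<inter> B) f"
  using smooth_subset[of "A \<inter> B" A f] by blast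

lemma smooth_Int2: "smooth_on B f \<Longrightarrow> smooth_on (A \<inter> B) f"
  using smooth_subset[of "A \<inter> B" B f] by blast

context fs
begin

definition sm :: "('a \<Rightarrow> 'b::real_normed_vector) \<Rightarrow> bool" where
  "sm f \<longleftrightarrow> (\<exists>V. open V \<and> x \<in> V \<and> smooth_on V f)"

lemma ls_dom:
  assumes "ls Y"
  shows "\<exists>V. open V \<and> x \<in> V \<and> V \<subseteq> W \<and> smooth_on V Y \<and> (\<forall>y\<in>V. Y y \<in> D y)"
proof -
  obtain V where V: "x \<in> V" "section_on U D V Y" using assms unfolding ls_def local_section_def by blast
  show ?thesis using V oW xW
    by (intro exI[of _ "V \<inter> W"]) (auto simp: section_on_def intro: smooth_Int1)
qed

lemma ls_sm: "ls Y \<Longrightarrow> sm Y"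
  unfolding sm_def using ls_dom by blast

lemma common_dom:
  assumes "\<forall>Y\<in>set Ys. ls Y"
  shows "\<exists>A. open A \<and> x \<in> A \<and> A \<subseteq> W \<and> (\<forall>Y\<in>set Ys. smooth_on A Y)"
  using assms
proof (induction Ys)
  case Nil show ?case by (rule exI[of _ W]) (simp add: oW xW)
next
  case (Cons Y Ys)
  have "\<forall>Y\<in>set Ys. ls Y" using Cons.prems by simp
  then obtain A where A: "open A" "x \<in> A" "A \<subseteq> W" "\<forall>Y\<in>set Ys. smooth_on A Y" using Cons.IH by blast
  have "ls Y" using Cons.prems by simp
  then obtain V where V: "open V" "x \<in> V" "smooth_on V Y" using ls_dom by blast
  have "open (A \<inter> V)" "x \<in> A \<inter> V" "A \<inter> V \<subseteq> W" using A V by auto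
  moreover have "\<forall>Z\<in>set (Y # Ys). smooth_on (A \<inter> V) Z"
    using A(4) V(3) by (auto intro: smooth_Int1 smooth_Int2)
  ultimately show ?case by blast
qed

lemma sm_dom:
  assumes "sm f" "\<forall>Y\<in>set Ys. ls Y"
  shows "\<exists>A. open A \<and> x \<in> A \<and> A \<subseteq> W \<and> smooth_on A f \<and> (\<forall>Y\<in>set Ys. smooth_on A Y)"
proof -
  obtain A where A: "open A" "x \<in> A" "A \<subseteq> W" "\<forall>Y\<in>set Ys. smooth_on A Y" using common_dom[OF assms(2)] by blast
  obtain V where V: "open V" "x \<in> V" "smooth_on V f" using assms(1) unfolding sm_def by blast
  have "open (A \<inter> V)" "x \<in> A \<inter> V" "A \<inter> V \<subseteq> W" using A V by auto
  moreover have "\<forall>Z\<in>set Ys. smooth_on (A \<inter> V) Z"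
    using A(4) by (auto intro: smooth_Int1)
  moreover have "smooth_on (A \<inter> V) f" using V(3) by (rule smooth_Int2)
  ultimately show ?thesis by blast
qed

lemma sm_fin_dom:
  fixes g :: "'i \<Rightarrow> 'a \<Rightarrow> 'b::real_normed_vector"
  assumes "finite S" "\<forall>i\<in>S. sm (g i)" "\<forall>Y\<in>set Ys. ls Y"
  shows "\<exists>A. open A \<and> x \<in> A \<and> A \<subseteq> W \<and> (\<forall>i\<in>S. smooth_on A (g i)) \<and> (\<forall>Y\<in>set Ys. smooth_on A Y)"
  using assms(1,2)
proof (induction S rule: finite_induct)
  case empty
  obtain A where A: "open A" "x \<in> A" "A \<subseteq> W" "\<forall>Y\<in>set Ys. smooth_on A Y" using common_dom[OF assms(3)] by blast
  then show ?case by (intro exI[of _ A]) simp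
next
  case (insert a S)
  have "\<forall>i\<in>S. sm (g i)" using insert.prems by simp
  then obtain A where A: "open A" "x \<in> A" "A \<subseteq> W" "\<forall>i\<in>S. smooth_on A (g i)" "\<forall>Y\<in>set Ys. smooth_on A Y"
    using insert.IH by blast
  have "sm (g a)" using insert.prems by simp
  then obtain V where V: "open V" "x \<in> V" "smooth_on V (g a)" unfolding sm_def by blast
  have "open (A \<inter> V)" "x \<in> A \<inter> V" "A \<inter> V \<subseteq> W" using A V by auto
  moreover have "\<forall>Z\<in>set Ys. smooth_on (A \<inter> V) Z"
    using A(5) by (auto intro: smooth_Int1)
  moreover have "\<forall>i\<in>insert a S. smooth_on (A \<inter> V) (g i)"
    using A(4) V(3) by (auto intro: smooth_Int1 smooth_Int2)
  ultimately show ?case by blast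
qed

lemma sm2:
  assumes "sm f" "sm g"
  shows "\<exists>A. open A \<and> x \<in> A \<and> A \<subseteq> W \<and> smooth_on A f \<and> smooth_on A g"
proof -
  obtain A where A: "open A" "x \<in> A" "A \<subseteq> W" "smooth_on A f" using sm_dom[OF assms(1), of "[]"] by auto
  obtain V where V: "open V" "x \<in> V" "smooth_on V g" using assms(2) unfolding sm_def by blast
  have "open (A \<inter> V)" "x \<in> A \<inter> V" "A \<inter> V \<subseteq> W" using A V by auto
  moreover have "smooth_on (A \<inter> V) f" using A(4) by (rule smooth_Int1)
  moreover have "smooth_on (A \<inter> V) g" using V(3) by (rule smooth_Int2)
  ultimately show ?thesis by blast
qed

lemma sm_cong:
  assumes "open A" "x \<in> A" "\<forall>y\<in>A. f y = g y" "sm g"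
  shows "sm f"
proof -
  obtain V where V: "open V" "x \<in> V" "smooth_on V g" using assms(4) unfolding sm_def by blast
  have "smooth_on (A \<inter> V) g" using smooth_subset[OF _ V(3)] by blast
  then have "smooth_on (A \<inter> V) f" using smooth_transfer[of "A \<inter> V" f g] assms(1,3) V(1) by auto
  then show ?thesis unfolding sm_def using assms(1,2) V by blast
qed

lemma sm_mult:
  fixes f g :: "'a \<Rightarrow> real"
  assumes "sm f" "sm g" shows "sm (\<lambda>y. f y * g y)"
proof -
  obtain A where A: "open A" "x \<in> A" "smooth_on A f" "smooth_on A g" using sm2[OF assms] by blast
  show ?thesis unfolding sm_def using A smooth_mult[OF A(1,3,4)] by blast
qed

lemma sm_diff:
  fixes f g :: "'a \<Rightarrow> 'b::real_normed_vector"
  assumes "sm f" "sm g" shows "sm (\<lambda>y. f y - g y)"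
proof -
  obtain A where A: "open A" "x \<in> A" "smooth_on A f" "smooth_on A g" using sm2[OF assms] by blast
  show ?thesis unfolding sm_def using A smooth_diff[OF A(1,3,4)] by blast
qed

lemma sm_lie_deriv:
  fixes f :: "'a \<Rightarrow> real"
  assumes "sm Y" "sm f" shows "sm (lie_deriv Y f)"
proof -
  obtain A where A: "open A" "x \<in> A" "smooth_on A Y" "smooth_on A f" using sm2[OF assms] by blast
  show ?thesis unfolding sm_def using A smooth_lie_deriv[OF A(1,3,4)] by blast
qed

lemma sm_bracket:
  assumes "sm X" "sm Y" shows "sm (lie_bracket X Y)"
proof -
  obtain A where A: "open A" "x \<in> A" "smooth_on A X" "smooth_on A Y" using sm2[OF assms] by blast
  show ?thesis unfolding sm_def using A smooth_bracket[OF A(1,3,4)] by blast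
qed

lemma sm_sum:
  fixes g :: "'i \<Rightarrow> 'a \<Rightarrow> real"
  assumes "finite S" "\<forall>i\<in>S. sm (g i)"
  shows "sm (\<lambda>y. \<Sum>i\<in>S. g i y)"
proof -
  obtain A where A: "open A" "x \<in> A" "\<forall>i\<in>S. smooth_on A (g i)" using sm_fin_dom[OF assms, of "[]"] by auto
  show ?thesis unfolding sm_def using A smooth_sum[OF A(1) assms(1) A(3)] by blast
qed

lemma sm_coef: "sm V \<Longrightarrow> a \<in> I \<Longrightarrow> sm (coef V a)"
  unfolding sm_def using coef_smooth by blast

lemma van_le: "m \<le> 0 \<Longrightarrow> van m g"
  unfolding van_def by auto

lemma van_mono: "m' \<le> m \<Longrightarrow> van m g \<Longrightarrow> van m' g"
  unfolding van_def by auto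

lemma van_val: "van m g \<Longrightarrow> 1 \<le> m \<Longrightarrow> g x = 0"
  unfolding van_def by (drule spec[of _ "[]"]) auto

lemma van_deriv:
  assumes "van m g" "ls Y"
  shows "van (m - 1) (lie_deriv Y g)"
  unfolding van_def
proof (intro allI impI)
  fix Ys assume a: "int (length Ys) < m - 1 \<and> (\<forall>Y\<in>set Ys. ls Y)"
  have "int (length (Ys @ [Y])) < m \<and> (\<forall>Z\<in>set (Ys @ [Y]). ls Z)" using a assms(2) by auto
  from assms(1)[unfolded van_def, rule_format, OF this]
  have "foldr lie_deriv (Ys @ [Y]) g x = 0" .
  then show "foldr lie_deriv Ys (lie_deriv Y g) x = 0" by simp
qed

lemma van_cong:
  assumes "open A" "x \<in> A" "\<forall>y\<in>A. g' y = g y" "van m g"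
  shows "van m g'"
  unfolding van_def
proof (intro allI impI)
  fix Ys assume a: "int (length Ys) < m \<and> (\<forall>Y\<in>set Ys. ls Y)"
  have "foldr lie_deriv Ys g' x = foldr lie_deriv Ys g x"
    using foldr_cong[OF assms(1) assms(3)] assms(2) by blast
  then show "foldr lie_deriv Ys g' x = 0" using assms(4) a unfolding van_def by auto
qed

lemma van_zero:
  assumes "open A" "x \<in> A" "\<forall>y\<in>A. g y = 0"
  shows "van m g"
  by (rule van_cong[OF assms]) (simp add: van_def foldr_zero)

lemma van_add:
  assumes "sm g" "sm h" "van m g" "van m h"
  shows "van m (\<lambda>y. g y + h y)"
  unfolding van_def
proof (intro allI impI)
  fix Ys assume a: "int (length Ys) < m \<and> (\<forall>Y\<in>set Ys. ls Y)"
  have "\<forall>i\<in>{g, h}. sm i" using assms(1,2) by simp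
  then obtain A where A0: "open A" "x \<in> A" "\<forall>i\<in>{g, h}. smooth_on A i"
    "\<forall>Y\<in>set Ys. smooth_on A Y"
    using sm_fin_dom[of "{g, h}" "\<lambda>f. f" Ys] a by blast
  have A: "open A" "x \<in> A" "smooth_on A g" "smooth_on A h" "\<forall>Y\<in>set Ys. smooth_on A Y" using A0 by auto
  have "foldr lie_deriv Ys (\<lambda>y. g y + h y) x = foldr lie_deriv Ys g x + foldr lie_deriv Ys h x"
    using foldr_add[OF A(1) A(5) A(3) A(4)] A(2) by blast
  then show "foldr lie_deriv Ys (\<lambda>y. g y + h y) x = 0" using assms(3,4) a unfolding van_def by auto
qed

lemma van_diff:
  assumes "sm g" "sm h" "van m g" "van m h"
  shows "van m (\<lambda>y. g y - h y)"
  unfolding van_def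
proof (intro allI impI)
  fix Ys assume a: "int (length Ys) < m \<and> (\<forall>Y\<in>set Ys. ls Y)"
  have "\<forall>i\<in>{g, h}. sm i" using assms(1,2) by simp
  then obtain A where A0: "open A" "x \<in> A" "\<forall>i\<in>{g, h}. smooth_on A i"
    "\<forall>Y\<in>set Ys. smooth_on A Y"
    using sm_fin_dom[of "{g, h}" "\<lambda>f. f" Ys] a by blast
  have A: "open A" "x \<in> A" "smooth_on A g" "smooth_on A h" "\<forall>Y\<in>set Ys. smooth_on A Y" using A0 by auto
  have "foldr lie_deriv Ys (\<lambda>y. g y - h y) x = foldr lie_deriv Ys g x - foldr lie_deriv Ys h x"
    using foldr_diff[OF A(1) A(5) A(3) A(4)] A(2) by blast
  then show "foldr lie_deriv Ys (\<lambda>y. g y - h y) x = 0" using assms(3,4) a unfolding van_def by auto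
qed

lemma van_sum:
  fixes g :: "'i \<Rightarrow> 'a \<Rightarrow> real"
  assumes "finite S" "\<forall>i\<in>S. sm (g i)" "\<forall>i\<in>S. van m (g i)"
  shows "van m (\<lambda>y. \<Sum>i\<in>S. g i y)"
  using assms
proof (induction S rule: finite_induct)
  case empty then show ?case by (simp add: van_def foldr_zero)
next
  case (insert a S)
  have "van m (\<lambda>y. g a y + (\<Sum>i\<in>S. g i y))"
    using insert by (intro van_add sm_sum) auto
  then show ?case using insert by simp
qed

lemma lie_deriv_mult:
  assumes "f differentiable (at y)" "g differentiable (at y)"
  shows "lie_deriv Y (\<lambda>z. f z * g z) y = lie_deriv Y f y * g y + f y * lie_deriv Y g y"
proof -
  have "((\<lambda>z. f z * g z) has_derivative
      (\<lambda>h. f y * frechet_derivative g (at y) h + frechet_derivative f (at y) h * g y)) (at y)"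
    by (rule has_derivative_mult[OF fd_works[OF assms(1)] fd_works[OF assms(2)]])
  then show ?thesis unfolding lie_deriv_def by (simp add: fd_eq)
qed

lemma van_mult_nat:
  "\<forall>g h. van (int n) g \<and> sm g \<and> sm h \<longrightarrow> van (int n) (\<lambda>y. g y * h y)"
proof (induction n)
  case 0 then show ?case by (simp add: van_le)
next
  case (Suc n)
  show ?case
  proof (intro allI impI)
    fix g h :: "'a \<Rightarrow> real"
    assume a: "van (int (Suc n)) g \<and> sm g \<and> sm h"
    show "van (int (Suc n)) (\<lambda>y. g y * h y)"
      unfolding van_def
    proof (intro allI impI)
      fix Ys assume b: "int (length Ys) < int (Suc n) \<and> (\<forall>Y\<in>set Ys. ls Y)"
      show "foldr lie_deriv Ys (\<lambda>y. g y * h y) x = 0"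
      proof (cases Ys rule: rev_exhaust)
        case Nil
        then show ?thesis using van_val[of "int (Suc n)" g] a by simp
      next
        case (snoc Ys' Y)
        have lY: "ls Y" and lYs: "\<forall>Y\<in>set Ys'. ls Y" and len: "length Ys' < n"
          using b snoc by auto
        have sY: "sm Y" using ls_sm[OF lY] .
        have sg: "sm g" and sh: "sm h" using a by auto
        have sYg: "sm (lie_deriv Y g)" by (rule sm_lie_deriv[OF sY sg])
        have sYh: "sm (lie_deriv Y h)" by (rule sm_lie_deriv[OF sY sh])
        have "\<forall>i\<in>{g, h, lie_deriv Y g, lie_deriv Y h}. sm i" using sg sh sYg sYh by simp
        moreover have "\<forall>Z\<in>set (Y # Ys'). ls Z" using lY lYs by simp
        ultimately obtain A where A0: "open A" "x \<in> A" "\<forall>i\<in>{g, h, lie_deriv Y g, lie_deriv Y h}. smooth_on A i"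
          "\<forall>Z\<in>set (Y # Ys'). smooth_on A Z"
          using sm_fin_dom[of "{g, h, lie_deriv Y g, lie_deriv Y h}" "\<lambda>f. f" "Y # Ys'"] by blast
        have A: "open A" "x \<in> A" "\<forall>Z\<in>set Ys'. smooth_on A Z" using A0 by auto
        have sAg: "smooth_on A g" and sAh: "smooth_on A h" and sAYg: "smooth_on A (lie_deriv Y g)"
          and sAYh: "smooth_on A (lie_deriv Y h)" using A0(3) by auto
        have eq: "\<forall>y\<in>A. lie_deriv Y (\<lambda>z. g z * h z) y = lie_deriv Y g y * h y + g y * lie_deriv Y h y"
          using lie_deriv_mult smooth_diff_at[OF sAg] smooth_diff_at[OF sAh] by blast
        have "foldr lie_deriv Ys (\<lambda>y. g y * h y) x = foldr lie_deriv Ys' (lie_deriv Y (\<lambda>z. g z * h z)) x"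
          using snoc by simp
        also have "\<dots> = foldr lie_deriv Ys' (\<lambda>y. lie_deriv Y g y * h y + g y * lie_deriv Y h y) x"
          using foldr_cong[OF A(1) eq] A(2) by blast
        also have "\<dots> = foldr lie_deriv Ys' (\<lambda>y. lie_deriv Y g y * h y) x + foldr lie_deriv Ys' (\<lambda>y. g y * lie_deriv Y h y) x"
          using foldr_add[OF A(1) A(3) smooth_mult[OF A(1) sAYg sAh] smooth_mult[OF A(1) sAg sAYh]] A(2)
          by blast
        also have "\<dots> = 0"
        proof -
          have v1: "van (int n) (lie_deriv Y g)"
            using van_deriv[of "int (Suc n)" g Y] a lY by simp
          have v2: "van (int n) g" using van_mono[of "int n" "int (Suc n)" g] a by simp
          have "van (int n) (\<lambda>y. lie_deriv Y g y * h y)" using Suc.IH v1 sYg sh by blast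
          moreover have "van (int n) (\<lambda>y. g y * lie_deriv Y h y)" using Suc.IH v2 sg sYh by blast
          ultimately show ?thesis using len lYs unfolding van_def by auto
        qed
        finally show ?thesis .
      qed
    qed
  qed
qed

lemma van_mult:
  assumes "van m g" "sm g" "sm h"
  shows "van m (\<lambda>y. g y * h y)"
proof (cases "m \<le> 0")
  case True then show ?thesis by (rule van_le)
next
  case False
  then obtain n where "m = int n" by (metis nonneg_int_cases not_le order_less_le)
  then show ?thesis using van_mult_nat assms by blast
qed

end


context fs
begin

lemma sm_Zf: "a \<in> I \<Longrightarrow> sm (Zf a)"
  unfolding sm_def using smooth_Zf oW xW by blast

lemma bracket_coef:
  assumes sV: "sm V" and lY: "ls Y" and b: "b \<in> I"
  shows "\<exists>A. open A \<and> x \<in> A \<and> (\<forall>y\<in>A. coef (lie_bracket V Y) b y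
      = (\<Sum>a\<in>I. coef V a y * coef (lie_bracket (Zf a) Y) b y) - lie_deriv Y (coef V b) y)"
proof -
  have "\<forall>a\<in>I. sm (coef V a)" using sm_coef[OF sV] by blast
  moreover have "\<forall>Z\<in>set [Y]. ls Z" using lY by simp
  ultimately obtain A1 where A1: "open A1" "x \<in> A1" "A1 \<subseteq> W" "\<forall>a\<in>I. smooth_on A1 (coef V a)"
      "\<forall>Z\<in>set [Y]. smooth_on A1 Z"
    using sm_fin_dom[OF finI, of "coef V" "[Y]"] by blast
  obtain A2 where A2: "open A2" "x \<in> A2" "smooth_on A2 V" using sV unfolding sm_def by blast
  define A where "A = A1 \<inter> A2"
  have oA: "open A" and xA: "x \<in> A" and AW: "A \<subseteq> W" using A1 A2 by (auto simp: A_def)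
  have sY: "smooth_on A Y" using A1(5) by (auto simp: A_def intro: smooth_Int1)
  have sV: "smooth_on A V" using A2(3) by (auto simp: A_def intro: smooth_Int2)
  have sg: "\<forall>a\<in>I. smooth_on A (coef V a)" using A1(4) by (auto simp: A_def intro: smooth_Int1)
  have sZ: "\<forall>a\<in>I. smooth_on A (Zf a)" using smooth_Zf AW smooth_subset by blast
  have "\<forall>y\<in>A. coef (lie_bracket V Y) b y
      = (\<Sum>a\<in>I. coef V a y * coef (lie_bracket (Zf a) Y) b y) - lie_deriv Y (coef V b) y"
  proof
    fix y assume y: "y \<in> A"
    have yW: "y \<in> W" using y AW by blast
    let ?g = "coef V"
    let ?h = "\<lambda>a. coef (lie_bracket (Zf a) Y)"
    have dg: "\<forall>a\<in>I. ?g a differentiable (at y)" using sg y smooth_diff_at by blast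
    have dZ: "\<forall>a\<in>I. Zf a differentiable (at y)" using sZ y smooth_diff_at by blast
    have dY: "Y differentiable (at y)" using sY y smooth_diff_at by blast
    have eqA: "\<forall>z\<in>A. V z = (\<Sum>a\<in>I. ?g a z *\<^sub>R Zf a z)" using coef_rep AW by blast
    have "frechet_derivative V (at y) = frechet_derivative (\<lambda>z. \<Sum>a\<in>I. ?g a z *\<^sub>R Zf a z) (at y)"
      by (rule fd_cong[OF oA y eqA])
    also have "\<dots> = (\<lambda>h. \<Sum>a\<in>I. ?g a y *\<^sub>R frechet_derivative (Zf a) (at y) h
          + frechet_derivative (?g a) (at y) h *\<^sub>R Zf a y)"
    proof (rule frechet_derivative_at[symmetric], rule has_derivative_sum)
      fix a assume a: "a \<in> I"
      show "((\<lambda>z. ?g a z *\<^sub>R Zf a z) has_derivative (\<lambda>h. ?g a y *\<^sub>R frechet_derivative (Zf a) (at y) h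
          + frechet_derivative (?g a) (at y) h *\<^sub>R Zf a y)) (at y)"
        using dg dZ a by (intro has_derivative_scaleR fd_works) auto
    qed
    finally have fdV: "frechet_derivative V (at y) (Y y) = (\<Sum>a\<in>I. ?g a y *\<^sub>R frechet_derivative (Zf a) (at y) (Y y)
          + lie_deriv Y (?g a) y *\<^sub>R Zf a y)"
      by (simp add: lie_deriv_def)
    have lY: "linear (frechet_derivative Y (at y))" by (rule linear_frechet_derivative[OF dY])
    have fdY: "frechet_derivative Y (at y) (V y) = (\<Sum>a\<in>I. ?g a y *\<^sub>R frechet_derivative Y (at y) (Zf a y))"
      using coef_rep[OF yW, of V] by (simp add: linear_sum[OF lY] linear_scale[OF lY])
    have "lie_bracket V Y y = (\<Sum>a\<in>I. ?g a y *\<^sub>R lie_bracket (Zf a) Y y) - (\<Sum>a\<in>I. lie_deriv Y (?g a) y *\<^sub>R Zf a y)"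
      unfolding lie_bracket_def fdV fdY
      by (simp add: scaleR_right_diff_distrib sum_subtractf sum.distrib algebra_simps)
    also have "(\<Sum>a\<in>I. ?g a y *\<^sub>R lie_bracket (Zf a) Y y) = (\<Sum>a\<in>I. ?g a y *\<^sub>R (\<Sum>c\<in>I. ?h a c y *\<^sub>R Zf c y))"
      using coef_rep[OF yW] by simp
    also have "\<dots> = (\<Sum>c\<in>I. (\<Sum>a\<in>I. ?g a y * ?h a c y) *\<^sub>R Zf c y)"
      by (rule sum_swap_alg[OF finI finI])
    finally have "lie_bracket V Y y = (\<Sum>c\<in>I. ((\<Sum>a\<in>I. ?g a y * ?h a c y) - lie_deriv Y (?g c) y) *\<^sub>R Zf c y)"
      by (simp add: scaleR_diff_left sum_subtractf)
    from coef_unique[of y "lie_bracket V Y" _ b, OF yW this b]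
    show "coef (lie_bracket V Y) b y = (\<Sum>a\<in>I. ?g a y * ?h a b y) - lie_deriv Y (?g b) y" .
  qed
  then show ?thesis using oA xA by blast
qed

lemma h_vanish:
  assumes lY: "ls Y" and a: "a \<in> I" and b: "b \<in> I" and ab: "fst a + 1 < fst b"
  shows "\<exists>A. open A \<and> x \<in> A \<and> (\<forall>y\<in>A. coef (lie_bracket (Zf a) Y) b y = 0)"
proof -
  obtain V where V: "x \<in> V" "section_on U D V Y" using lY unfolding ls_def local_section_def by blast
  define A where "A = V \<inter> W"
  have oA: "open A" and xA: "x \<in> A" and AW: "A \<subseteq> W" and AV: "A \<subseteq> V"
    using V oW xW by (auto simp: A_def section_on_def)
  have a1: "1 \<le> fst a" using a I_iff by blast
  obtain s where s: "fst a = Suc s" using a1 by (cases "fst a") auto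
  have secY: "section_on U D A Y" by (rule section_on_restrict[OF V(2) oA AV])
  have secZ: "section_on U (flag U D (Suc s)) A (Zf a)"
    using section_on_restrict[OF Zf_sec[OF a] oA AW] s by simp
  have "\<forall>y\<in>A. coef (lie_bracket (Zf a) Y) b y = 0"
  proof
    fix y assume y: "y \<in> A"
    have "lie_bracket Y (Zf a) y \<in> flag U D (Suc (Suc s)) y"
      using y secY secZ by (auto intro!: span_base)
    then have "lie_bracket (Zf a) Y y \<in> flag U D (Suc (Suc s)) y"
      by (simp add: lie_bracket_antisym[of "Zf a" Y] span_neg)
    then show "coef (lie_bracket (Zf a) Y) b y = 0"
      using coef_supp[of y "Suc (Suc s)" "lie_bracket (Zf a) Y" b] y AW b ab s by auto
  qed
  then show ?thesis using oA xA by blast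
qed

lemma Wsec_vanish:
  assumes lW: "ls Wf" and b: "b \<in> I" and b1: "1 < fst b"
  shows "\<exists>A. open A \<and> x \<in> A \<and> (\<forall>y\<in>A. coef Wf b y = 0)"
proof -
  obtain A where A: "open A" "x \<in> A" "A \<subseteq> W" "\<forall>y\<in>A. Wf y \<in> D y" using ls_dom[OF lW] by blast
  have "\<forall>y\<in>A. coef Wf b y = 0"
    using A coef_supp[of _ 1 Wf b] b b1 by auto
  then show ?thesis using A by blast
qed

definition wt :: "int \<Rightarrow> ('a \<Rightarrow> 'a) \<Rightarrow> bool" where
  "wt w V \<longleftrightarrow> sm V \<and> (\<forall>a\<in>I. van (w + int (fst a)) (coef V a))"

lemma wt_bracket:
  assumes wV: "wt w V" and lY: "ls Y"
  shows "wt (w - 1) (lie_bracket V Y)"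
proof -
  have sV: "sm V" using wV by (simp add: wt_def)
  have sY: "sm Y" by (rule ls_sm[OF lY])
  have sB: "sm (lie_bracket V Y)" by (rule sm_bracket[OF sV sY])
  have "van (w - 1 + int (fst b)) (coef (lie_bracket V Y) b)" if b: "b \<in> I" for b
  proof -
    obtain A where A: "open A" "x \<in> A" "\<forall>y\<in>A. coef (lie_bracket V Y) b y
      = (\<Sum>a\<in>I. coef V a y * coef (lie_bracket (Zf a) Y) b y) - lie_deriv Y (coef V b) y"
      using bracket_coef[OF sV lY b] by blast
    have smh: "sm (coef (lie_bracket (Zf a) Y) b)" if "a \<in> I" for a
      using sm_coef[OF sm_bracket[OF sm_Zf[OF that] sY] b] .
    have smp: "\<forall>a\<in>I. sm (\<lambda>y. coef V a y * coef (lie_bracket (Zf a) Y) b y)"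
      using sm_mult sm_coef[OF sV] smh by blast
    have vp: "\<forall>a\<in>I. van (w - 1 + int (fst b)) (\<lambda>y. coef V a y * coef (lie_bracket (Zf a) Y) b y)"
    proof
      fix a assume a: "a \<in> I"
      show "van (w - 1 + int (fst b)) (\<lambda>y. coef V a y * coef (lie_bracket (Zf a) Y) b y)"
      proof (cases "fst a + 1 < fst b")
        case True
        obtain A' where A': "open A'" "x \<in> A'" "\<forall>y\<in>A'. coef (lie_bracket (Zf a) Y) b y = 0"
          using h_vanish[OF lY a b True] by blast
        show ?thesis by (rule van_zero[OF A'(1,2)]) (use A'(3) in simp)
      next
        case False
        have "van (w + int (fst a)) (coef V a)" using wV a by (simp add: wt_def)
        then have "van (w - 1 + int (fst b)) (coef V a)" by (rule van_mono[rotated]) (use False in simp)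
        then show ?thesis by (rule van_mult[OF _ sm_coef[OF sV a] smh[OF a]])
      qed
    qed
    have v1: "van (w - 1 + int (fst b)) (\<lambda>y. \<Sum>a\<in>I. coef V a y * coef (lie_bracket (Zf a) Y) b y)"
      by (rule van_sum[OF finI smp vp])
    have v2: "van (w - 1 + int (fst b)) (lie_deriv Y (coef V b))"
      using van_deriv[of "w + int (fst b)" "coef V b" Y] wV b lY by (simp add: wt_def algebra_simps)
    have "van (w - 1 + int (fst b)) (\<lambda>y. (\<Sum>a\<in>I. coef V a y * coef (lie_bracket (Zf a) Y) b y) - lie_deriv Y (coef V b) y)"
      by (rule van_diff[OF sm_sum[OF finI smp] sm_lie_deriv[OF sY sm_coef[OF sV b]] v1 v2])
    then show ?thesis by (rule van_cong[OF A(1,2,3)])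
  qed
  then show ?thesis using sB by (simp add: wt_def)
qed

lemma wt_foldl:
  "wt w V \<Longrightarrow> \<forall>Y\<in>set Ys. ls Y \<Longrightarrow> wt (w - int (length Ys)) (foldl lie_bracket V Ys)"
proof (induction Ys arbitrary: V w)
  case Nil then show ?case by simp
next
  case (Cons Y Ys)
  have "wt (w - 1) (lie_bracket V Y)" using wt_bracket Cons.prems by simp
  then have "wt (w - 1 - int (length Ys)) (foldl lie_bracket (lie_bracket V Y) Ys)"
    using Cons.IH Cons.prems by simp
  then show ?case by (simp add: algebra_simps)
qed

lemma wt_val: "wt w V \<Longrightarrow> b \<in> I \<Longrightarrow> 1 \<le> w + int (fst b) \<Longrightarrow> coef V b x = 0"
  unfolding wt_def using van_val by blast

lemma CL:
  "\<forall>V w T. sm V \<and> (\<forall>t<T. \<forall>Ys. length Ys = t \<and> (\<forall>Y\<in>set Ys. ls Y) \<longrightarrow>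
        (\<forall>b\<in>I. int t - w < int (fst b) \<longrightarrow> coef (foldl lie_bracket V Ys) b x = 0))
    \<longrightarrow> (\<forall>b\<in>I. \<forall>Ys. length Ys = n \<and> n < T \<and> int n < w + int (fst b) \<and> (\<forall>Y\<in>set Ys. ls Y)
        \<longrightarrow> foldr lie_deriv Ys (coef V b) x = 0)"
proof (induction n rule: less_induct)
  case (less n)
  show ?case
  proof (intro allI impI ballI)
    fix V w T b Ys
    assume H: "sm V \<and> (\<forall>t<T. \<forall>Ys. length Ys = t \<and> (\<forall>Y\<in>set Ys. ls Y) \<longrightarrow>
        (\<forall>b\<in>I. int t - w < int (fst b) \<longrightarrow> coef (foldl lie_bracket V Ys) b x = 0))"
      and b: "b \<in> I"
      and c: "length Ys = n \<and> n < T \<and> int n < w + int (fst b) \<and> (\<forall>Y\<in>set Ys. ls Y)"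
    have sV: "sm V" using H by blast
    show "foldr lie_deriv Ys (coef V b) x = 0"
    proof (cases Ys rule: rev_exhaust)
      case Nil
      then have "n = 0" using c by simp
      then show ?thesis using H c b Nil by auto
    next
      case (snoc Ys' Y)
      define m where "m = length Ys'"
      have nm: "n = Suc m" using c snoc by (simp add: m_def)
      have lY: "ls Y" and lYs: "\<forall>Z\<in>set Ys'. ls Z" using c snoc by auto
      have sY: "sm Y" by (rule ls_sm[OF lY])
      obtain A where A: "open A" "x \<in> A" "\<forall>y\<in>A. coef (lie_bracket V Y) b y
        = (\<Sum>a\<in>I. coef V a y * coef (lie_bracket (Zf a) Y) b y) - lie_deriv Y (coef V b) y"
        using bracket_coef[OF sV lY b] by blast
      have eqA: "\<forall>y\<in>A. lie_deriv Y (coef V b) y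
        = (\<Sum>a\<in>I. coef V a y * coef (lie_bracket (Zf a) Y) b y) - coef (lie_bracket V Y) b y"
        using A(3) by (simp add: algebra_simps)
      have smh: "sm (coef (lie_bracket (Zf a) Y) b)" if "a \<in> I" for a
        using sm_coef[OF sm_bracket[OF sm_Zf[OF that] sY] b] .
      have smp: "\<forall>a\<in>I. sm (\<lambda>y. coef V a y * coef (lie_bracket (Zf a) Y) b y)"
        using sm_mult sm_coef[OF sV] smh by blast
      have vPsi: "van (int m + 1) (coef (lie_bracket V Y) b)"
        unfolding van_def
      proof (intro allI impI)
        fix Zs assume z: "int (length Zs) < int m + 1 \<and> (\<forall>Y\<in>set Zs. ls Y)"
        have k: "length Zs < n" using z nm by simp
        have H': "sm (lie_bracket V Y) \<and> (\<forall>t<T - 1. \<forall>Ys. length Ys = t \<and> (\<forall>Y\<in>set Ys. ls Y) \<longrightarrow>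
          (\<forall>b\<in>I. int t - (w - 1) < int (fst b) \<longrightarrow> coef (foldl lie_bracket (lie_bracket V Y) Ys) b x = 0))"
        proof (intro conjI allI impI ballI)
          show "sm (lie_bracket V Y)" by (rule sm_bracket[OF sV sY])
          fix t Zs' b' assume t: "t < T - 1" and z': "length Zs' = t \<and> (\<forall>Y\<in>set Zs'. ls Y)"
            and b': "b' \<in> I" and tb: "int t - (w - 1) < int (fst b')"
          have "length (Y # Zs') = Suc t \<and> (\<forall>Z\<in>set (Y # Zs'). ls Z)" using z' lY by simp
          moreover have "Suc t < T" using t by simp
          moreover have "int (Suc t) - w < int (fst b')" using tb by simp
          ultimately have "coef (foldl lie_bracket V (Y # Zs')) b' x = 0" using H b' by blast
          then show "coef (foldl lie_bracket (lie_bracket V Y) Zs') b' x = 0" by simp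
        qed
        have "length Zs < T - 1" using z c nm by (simp add: less_diff_conv)
        moreover have "int (length Zs) < (w - 1) + int (fst b)" using z c nm by simp
        ultimately show "foldr lie_deriv Zs (coef (lie_bracket V Y) b) x = 0"
          using less.IH[OF k, rule_format, OF H' b] z by blast
      qed
      have vg: "van (int m + 1) (coef V a)" if a: "a \<in> I" and ab: "\<not> fst a + 1 < fst b" for a
        unfolding van_def
      proof (intro allI impI)
        fix Zs assume z: "int (length Zs) < int m + 1 \<and> (\<forall>Y\<in>set Zs. ls Y)"
        have k: "length Zs < n" using z nm by simp
        have "length Zs < T" using z c nm by simp
        moreover have "int (length Zs) < w + int (fst a)" using z c nm ab by simp
        ultimately show "foldr lie_deriv Zs (coef V a) x = 0"
          using less.IH[OF k, rule_format, OF H a] z by blast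
      qed
      have vp: "\<forall>a\<in>I. van (int m + 1) (\<lambda>y. coef V a y * coef (lie_bracket (Zf a) Y) b y)"
      proof
        fix a assume a: "a \<in> I"
        show "van (int m + 1) (\<lambda>y. coef V a y * coef (lie_bracket (Zf a) Y) b y)"
        proof (cases "fst a + 1 < fst b")
          case True
          obtain A' where A': "open A'" "x \<in> A'" "\<forall>y\<in>A'. coef (lie_bracket (Zf a) Y) b y = 0"
            using h_vanish[OF lY a b True] by blast
          show ?thesis by (rule van_zero[OF A'(1,2)]) (use A'(3) in simp)
        next
          case False
          show ?thesis by (rule van_mult[OF vg[OF a False] sm_coef[OF sV a] smh[OF a]])
        qed
      qed
      have "van (int m + 1) (\<lambda>y. (\<Sum>a\<in>I. coef V a y * coef (lie_bracket (Zf a) Y) b y) - coef (lie_bracket V Y) b y)"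
        by (rule van_diff[OF sm_sum[OF finI smp] sm_coef[OF sm_bracket[OF sV sY] b] van_sum[OF finI smp vp] vPsi])
      then have "van (int m + 1) (lie_deriv Y (coef V b))" by (rule van_cong[OF A(1,2) eqA])
      then have "foldr lie_deriv Ys' (lie_deriv Y (coef V b)) x = 0"
        using lYs unfolding van_def m_def by auto
      then show ?thesis using snoc by simp
    qed
  qed
qed

end


lemma Lfilt_Lx: "Lfilt U D x i X \<Longrightarrow> Lx U D x X"
  by (induction i) auto

lemma Lfilt_vanish:
  "Lfilt U D x i X \<Longrightarrow> t \<le> i \<Longrightarrow> length Ys = t \<Longrightarrow> (\<forall>Y\<in>set Ys. local_section U D x Y)
    \<Longrightarrow> foldl lie_bracket X Ys x = 0"
proof (induction i arbitrary: t)
  case 0 then show ?case by simp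
next
  case (Suc i)
  show ?case
  proof (cases "t = Suc i")
    case True then show ?thesis using Suc.prems by auto
  next
    case False then show ?thesis using Suc by auto
  qed
qed

theorem lemma1:
  fixes U :: "'a::euclidean_space set" and D :: "'a \<Rightarrow> 'a set" and x :: 'a
    and \<kappa> :: nat and r :: "nat \<Rightarrow> nat" and Z :: "nat \<Rightarrow> nat \<Rightarrow> 'a \<Rightarrow> 'a"
    and W :: "'a set" and X :: "'a \<Rightarrow> 'a" and f :: "nat \<Rightarrow> nat \<Rightarrow> 'a \<Rightarrow> real" and i :: nat
  assumes distr: "smooth_distribution U D"
    and reg: "regular U D"
    and x_in: "x \<in> U"
    and kappa: "\<forall>y\<in>U. flag U D \<kappa> y = UNIV"
    and kappa_least: "\<forall>k<\<kappa>. \<not> (\<forall>y\<in>U. flag U D k y = UNIV)"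
    and W: "open W" "x \<in> W" "W \<subseteq> U"
    and Z_sec: "\<forall>j l. 1 \<le> j \<and> j \<le> \<kappa> \<and> l < r j \<longrightarrow> section_on U (flag U D j) W (Z j l)"
    and Z_frame: "\<forall>s\<ge>1. \<forall>y\<in>W.
        inj_on (\<lambda>(t, l). Z t l y) (frame_idx r \<kappa> s) \<and>
        independent ((\<lambda>(t, l). Z t l y) ` frame_idx r \<kappa> s) \<and>
        span ((\<lambda>(t, l). Z t l y) ` frame_idx r \<kappa> s) = flag U D s y"
    and X_filt: "Lfilt U D x i X"
    and X_expand: "\<forall>y\<in>W. X y = (\<Sum>(j, l)\<in>frame_idx r \<kappa> \<kappa>. f j l y *\<^sub>R Z j l y)"
  shows "\<forall>j l. 1 \<le> j \<and> j \<le> \<kappa> \<and> l < r j \<longrightarrow> mu U D x (i + j) (f j l)"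
proof -
  have openU: "open U" using distr unfolding smooth_distribution_def by blast
  have kpos: "1 \<le> \<kappa>"
  proof (rule ccontr)
    assume "\<not> 1 \<le> \<kappa>"
    then have "\<kappa> = 0" by simp
    moreover have "flag U D \<kappa> x = UNIV" using kappa x_in by blast
    ultimately have "(UNIV :: 'a set) = {0}" by simp
    moreover obtain b :: 'a where "b \<in> Basis" using nonempty_Basis by blast
    moreover have "b \<noteq> 0" using \<open>b \<in> Basis\<close> nonzero_Basis by blast
    ultimately show False by (metis UNIV_I singletonD)
  qed
  interpret F: fs U D x \<kappa> r Z W
    using openU x_in W kpos kappa Z_sec Z_frame by unfold_locales auto
  have LxX: "Lx U D x X" by (rule Lfilt_Lx[OF X_filt])
  have smX: "F.sm X" using LxX unfolding Lx_def F.sm_def by blast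
  have fcoef: "\<forall>y\<in>W. f (fst a) (snd a) y = F.coef X a y" if a: "a \<in> F.I" for a
  proof
    fix y assume y: "y \<in> W"
    have "X y = (\<Sum>b\<in>F.I. f (fst b) (snd b) y *\<^sub>R F.Zf b y)"
      using X_expand y unfolding F.I_def F.Zf_def by (simp add: case_prod_beta)
    from F.coef_unique[of y X _ a, OF y this a] show "f (fst a) (snd a) y = F.coef X a y" by simp
  qed
  have H: "\<forall>t<i + \<kappa>. \<forall>Ys. length Ys = t \<and> (\<forall>Y\<in>set Ys. F.ls Y) \<longrightarrow>
        (\<forall>b\<in>F.I. int t - int i < int (fst b) \<longrightarrow> F.coef (foldl lie_bracket X Ys) b x = 0)"
  proof (intro allI impI ballI)
    fix t Ys b assume t: "t < i + \<kappa>" and Ys: "length Ys = t \<and> (\<forall>Y\<in>set Ys. F.ls Y)"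
      and b: "b \<in> F.I" and tb: "int t - int i < int (fst b)"
    have lsYs: "\<forall>Y\<in>set Ys. local_section U D x Y" using Ys unfolding F.ls_def by blast
    show "F.coef (foldl lie_bracket X Ys) b x = 0"
    proof (cases "t \<le> i")
      case True
      have "foldl lie_bracket X Ys x = 0" using Lfilt_vanish[OF X_filt True] Ys lsYs by blast
      then show ?thesis using F.coef_zero[of x _ b] W(2) b by blast
    next
      case False
      then obtain Y1 Ys' where Ys1: "Ys = Y1 # Ys'" using Ys by (cases Ys) auto
      have lY1: "F.ls Y1" and lYs': "\<forall>Y\<in>set Ys'. F.ls Y" using Ys Ys1 by auto
      define Wf where "Wf = lie_bracket X Y1"
      have lW: "F.ls Wf" using LxX lY1 unfolding Lx_def Wf_def F.ls_def by blast
      have smW: "F.sm Wf" by (rule F.ls_sm[OF lW])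
      have wtW: "F.wt (int i - 1) Wf"
        unfolding F.wt_def
      proof (intro conjI ballI)
        show "F.sm Wf" by (rule smW)
        fix a assume a: "a \<in> F.I"
        show "F.van (int i - 1 + int (fst a)) (F.coef Wf a)"
        proof (cases "1 < fst a")
          case True
          obtain A where A: "open A" "x \<in> A" "\<forall>y\<in>A. F.coef Wf a y = 0"
            using F.Wsec_vanish[OF lW a True] by blast
          show ?thesis by (rule F.van_zero[OF A])
        next
          case False
          then have a1: "fst a = 1" using a F.I_iff by simp
          have HW: "F.sm Wf \<and> (\<forall>t<i. \<forall>Zs. length Zs = t \<and> (\<forall>Y\<in>set Zs. F.ls Y) \<longrightarrow>
              (\<forall>b\<in>F.I. int t - (int i - 1) < int (fst b) \<longrightarrow> F.coef (foldl lie_bracket Wf Zs) b x = 0))"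
          proof (intro conjI allI impI ballI)
            show "F.sm Wf" by (rule smW)
            fix t Zs b' assume t: "t < i" and Zs: "length Zs = t \<and> (\<forall>Y\<in>set Zs. F.ls Y)" and b': "b' \<in> F.I"
            have "foldl lie_bracket X (Y1 # Zs) x = 0"
              using Lfilt_vanish[OF X_filt, of "Suc t" "Y1 # Zs"] t Zs lY1 unfolding F.ls_def by auto
            then have "foldl lie_bracket Wf Zs x = 0" by (simp add: Wf_def)
            then show "F.coef (foldl lie_bracket Wf Zs) b' x = 0" using F.coef_zero[of x _ b'] W(2) b' by blast
          qed
          show ?thesis unfolding F.van_def
          proof (intro allI impI)
            fix Zs assume Zs: "int (length Zs) < int i - 1 + int (fst a) \<and> (\<forall>Y\<in>set Zs. F.ls Y)"
            have "length Zs < i" using Zs a1 by simp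
            then show "foldr lie_deriv Zs (F.coef Wf a) x = 0"
              using F.CL[of "length Zs", rule_format, OF HW a] Zs a1 by auto
          qed
        qed
      qed
      have "F.wt (int i - 1 - int (length Ys')) (foldl lie_bracket Wf Ys')"
        by (rule F.wt_foldl[OF wtW lYs'])
      moreover have "foldl lie_bracket X Ys = foldl lie_bracket Wf Ys'" using Ys1 by (simp add: Wf_def)
      moreover have "1 \<le> int i - 1 - int (length Ys') + int (fst b)" using tb Ys Ys1 by simp
      ultimately show ?thesis using F.wt_val b by metis
    qed
  qed
  show ?thesis
  proof (intro allI impI)
    fix j l assume jl: "1 \<le> j \<and> j \<le> \<kappa> \<and> l < r j"
    define a where "a = (j, l)"
    have a: "a \<in> F.I" using jl by (simp add: F.I_iff a_def)
    have fa: "\<forall>y\<in>W. f j l y = F.coef X a y" using fcoef[OF a] by (simp add: a_def)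
    obtain A where A: "open A" "x \<in> A" "smooth_on A (F.coef X a)"
      using F.sm_coef[OF smX a] unfolding F.sm_def by blast
    have "smooth_on (A \<inter> W) (F.coef X a)" using A(3) by (rule smooth_Int1)
    then have "smooth_on (A \<inter> W) (f j l)" using smooth_transfer[of "A \<inter> W" "f j l" "F.coef X a"] A(1) W(1) fa by auto
    moreover have "open (A \<inter> W)" "A \<inter> W \<subseteq> U" "x \<in> A \<inter> W" using A W by auto
    ultimately have sm: "\<exists>V. open V \<and> V \<subseteq> U \<and> x \<in> V \<and> smooth_on V (f j l)" by blast
    have "\<forall>Ys. length Ys < i + j \<and> (\<forall>Y\<in>set Ys. local_section U D x Y) \<longrightarrow> foldr lie_deriv Ys (f j l) x = 0"
    proof (intro allI impI)
      fix Ys assume Ys: "length Ys < i + j \<and> (\<forall>Y\<in>set Ys. local_section U D x Y)"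
      have "foldr lie_deriv Ys (f j l) x = foldr lie_deriv Ys (F.coef X a) x"
        using foldr_cong[OF W(1) fa] W(2) by blast
      also have "\<dots> = 0"
        using F.CL[of "length Ys", rule_format, OF conjI[OF smX H] a] Ys jl
        unfolding F.ls_def by (auto simp: a_def)
      finally show "foldr lie_deriv Ys (f j l) x = 0" .
    qed
    then show "mu U D x (i + j) (f j l)" using sm unfolding mu_def by blast
  qed
qed

end
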